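(* Let $I$ be a finite set and $T$ a tree on $I$. The lattice $[\hat{0},T]$ (an interval of $\operatorname{For}(I)$) is an LL-lattice.
   Context: A tree on a finite set $I$ is a (non-planar) rooted binary tree whose leaves are bijectively labeled by $I$: vertices are inner vertices (valence $3$) and leaves and the root (valence $1$), edges oriented towards the root; one-leaf trees are allowed. A forest on $I$ is a set of trees whose leaf sets partition $I$. For forests $F,G$ on $I$, $F \leq G$ if there is a continuous map $F\to G$ which (D1) is increasing with respect to orientation towards the root, (D2) maps inner vertices to inner vertices injectively, (D3) is the identity of $I$ on leaves, (D4) is injective on each tree of $F$. This gives the poset $\operatorname{For}(I)$ with minimum $\hat{0}$ (no inner vertices); $[\hat{0},T]$ is a lattice. In a finite lattice $L$, an element $x$ is left-modular if $y\vee(x\wedge z)=(y\vee x)\wedge z$ for all $y\le z$ in $L$; a maximal chain is left-modular if all its elements are. A maximal chain $m:\hat{0}=x_0\lhd x_1\lhd\dots\lhd x_n=\hat{1}$ partitions the set $\mathsf{A}$ of atoms into levels $\mathsf{A}_i=\{a\in\mathsf{A}: a\le x_i,\ a\not\le x_{i-1}\}$, $i\in[n]$; write $a\lhd_m b$ if $a\in\mathsf{A}_i$, $b\in\mathsf{A}_j$ with $i<j$. The chain $m$ satisfies the level condition if whenever $a_0\lhd_m a_1\lhd_m\dots\lhd_m a_k$ then $a_0\not\le\bigvee_{i=1}^k a_i$. $L$ is an LL-lattice if it has a maximal chain that is left-modular and satisfies the level condition. *)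

theory Defs
  imports Main
begin

text \<open>A vertex of a forest on I which is a leaf or an inner vertex is encoded by the set
of leaves below it (its cluster). Leaves are the singletons {i}; inner vertices are the
non-singleton clusters. The maximal clusters are the leaf sets
of the trees of the forest; each tree additionally has a root vertex above its maximal
cluster (not encoded explicitly).\<close>

definition inner_cl :: "'a set \<Rightarrow> bool" where
  "inner_cl C \<longleftrightarrow> \<not> (\<exists>i. C = {i})"

definition forest :: "'a set \<Rightarrow> 'a set set \<Rightarrow> bool" where
  "forest I F \<longleftrightarrow>
     (\<forall>C\<in>F. C \<noteq> {} \<and> C \<subseteq> I) \<and>
     (\<forall>i\<in>I. {i} \<in> F) \<and>
     (\<forall>C\<in>F. \<forall>D\<in>F. C \<subseteq> D \<or> D \<subseteq> C \<or> C \<inter> D = {}) \<and>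
     (\<forall>C\<in>F. inner_cl C \<longrightarrow> (\<exists>A\<in>F. \<exists>B\<in>F. A \<inter> B = {} \<and> A \<union> B = C \<and> A \<noteq> C \<and> B \<noteq> C))"

text \<open>A tree on I: a forest consisting of a single tree, i.e. I itself is a cluster.\<close>
definition is_tree :: "'a set \<Rightarrow> 'a set set \<Rightarrow> bool" where
  "is_tree I T \<longleftrightarrow> forest I T \<and> I \<in> T"

definition forest_bot :: "'a set \<Rightarrow> 'a set set" where
  "forest_bot I = (\<lambda>i. {i}) ` I"

definition f_edge :: "'a set set \<Rightarrow> 'a set \<Rightarrow> 'a set \<Rightarrow> bool" where
  "f_edge F C D \<longleftrightarrow> C \<in> F \<and> D \<in> F \<and> C \<subset> D \<and> \<not> (\<exists>E\<in>F. C \<subset> E \<and> E \<subset> D)"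

definition f_root :: "'a set set \<Rightarrow> 'a set \<Rightarrow> bool" where
  "f_root F R \<longleftrightarrow> R \<in> F \<and> \<not> (\<exists>E\<in>F. R \<subset> E)"

text \<open>For vertices p below q in G, the monotone path from p to q: the G-edges it traverses
(an edge of G is identified with its lower endpoint E, the edge going from E to its parent)
and the G-vertices strictly inside it.\<close>
definition path_edges :: "'a set set \<Rightarrow> 'a set \<Rightarrow> 'a set \<Rightarrow> 'a set set" where
  "path_edges G p q = {E\<in>G. p \<subseteq> E \<and> E \<subset> q}"

definition path_inner :: "'a set set \<Rightarrow> 'a set \<Rightarrow> 'a set \<Rightarrow> 'a set set" where
  "path_inner G p q = {E\<in>G. p \<subset> E \<and> E \<subset> q}"

text \<open>Injectivity of the (continuous, increasing) map determined by the vertex map phi on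
the tree of F with maximal cluster R: distinct vertices have distinct images, no vertex image
lies in the interior of an edge image, and distinct edges have disjoint open images.\<close>
definition inj_on_tree :: "'a set set \<Rightarrow> 'a set set \<Rightarrow> ('a set \<Rightarrow> 'a set) \<Rightarrow> 'a set \<Rightarrow> bool" where
  "inj_on_tree F G \<phi> R \<longleftrightarrow>
     inj_on \<phi> {C\<in>F. C \<subseteq> R} \<and>
     (\<forall>C D C'. f_edge F C D \<and> D \<subseteq> R \<and> C' \<in> F \<and> C' \<subseteq> R \<longrightarrow>
                \<phi> C' \<notin> path_inner G (\<phi> C) (\<phi> D)) \<and>
     (\<forall>C D C' D'. f_edge F C D \<and> f_edge F C' D' \<and> D \<subseteq> R \<and> D' \<subseteq> R \<and> (C, D) \<noteq> (C', D') \<longrightarrow>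
                path_edges G (\<phi> C) (\<phi> D) \<inter> path_edges G (\<phi> C') (\<phi> D') = {} \<and>
                path_inner G (\<phi> C) (\<phi> D) \<inter> path_inner G (\<phi> C') (\<phi> D') = {})"

definition forest_le :: "'a set \<Rightarrow> 'a set set \<Rightarrow> 'a set set \<Rightarrow> bool" where
  "forest_le I F G \<longleftrightarrow> forest I F \<and> forest I G \<and>
     (\<exists>\<phi>. (\<forall>C\<in>F. \<phi> C \<in> G) \<and>
          (\<forall>C D. f_edge F C D \<longrightarrow> \<phi> C \<subseteq> \<phi> D) \<and>
          (\<forall>C\<in>F. inner_cl C \<longrightarrow> inner_cl (\<phi> C)) \<and> inj_on \<phi> {C\<in>F. inner_cl C} \<and>
          (\<forall>i\<in>I. \<phi> {i} = {i}) \<and>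
          (\<forall>R. f_root F R \<longrightarrow> inj_on_tree F G \<phi> R))"

definition forest_interval :: "'a set \<Rightarrow> 'a set set \<Rightarrow> 'a set set set" where
  "forest_interval I T = {F. forest_le I (forest_bot I) F \<and> forest_le I F T}"

definition is_lub :: "'b set \<Rightarrow> ('b \<Rightarrow> 'b \<Rightarrow> bool) \<Rightarrow> 'b set \<Rightarrow> 'b \<Rightarrow> bool" where
  "is_lub P le S x \<longleftrightarrow> x \<in> P \<and> (\<forall>s\<in>S. le s x) \<and> (\<forall>y\<in>P. (\<forall>s\<in>S. le s y) \<longrightarrow> le x y)"

definition is_glb :: "'b set \<Rightarrow> ('b \<Rightarrow> 'b \<Rightarrow> bool) \<Rightarrow> 'b set \<Rightarrow> 'b \<Rightarrow> bool" where
  "is_glb P le S x \<longleftrightarrow> x \<in> P \<and> (\<forall>s\<in>S. le x s) \<and> (\<forall>y\<in>P. (\<forall>s\<in>S. le y s) \<longrightarrow> le y x)"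

definition Join :: "'b set \<Rightarrow> ('b \<Rightarrow> 'b \<Rightarrow> bool) \<Rightarrow> 'b set \<Rightarrow> 'b" where
  "Join P le S = (THE x. is_lub P le S x)"

definition join :: "'b set \<Rightarrow> ('b \<Rightarrow> 'b \<Rightarrow> bool) \<Rightarrow> 'b \<Rightarrow> 'b \<Rightarrow> 'b" where
  "join P le x y = Join P le {x, y}"

definition meet :: "'b set \<Rightarrow> ('b \<Rightarrow> 'b \<Rightarrow> bool) \<Rightarrow> 'b \<Rightarrow> 'b \<Rightarrow> 'b" where
  "meet P le x y = (THE z. is_glb P le {x, y} z)"

definition finite_lattice :: "'b set \<Rightarrow> ('b \<Rightarrow> 'b \<Rightarrow> bool) \<Rightarrow> bool" where
  "finite_lattice P le \<longleftrightarrow> finite P \<and> P \<noteq> {} \<and>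
     (\<forall>x\<in>P. le x x) \<and>
     (\<forall>x\<in>P. \<forall>y\<in>P. le x y \<and> le y x \<longrightarrow> x = y) \<and>
     (\<forall>x\<in>P. \<forall>y\<in>P. \<forall>z\<in>P. le x y \<and> le y z \<longrightarrow> le x z) \<and>
     (\<forall>x\<in>P. \<forall>y\<in>P. (\<exists>z. is_lub P le {x, y} z) \<and> (\<exists>z. is_glb P le {x, y} z))"

definition covers :: "'b set \<Rightarrow> ('b \<Rightarrow> 'b \<Rightarrow> bool) \<Rightarrow> 'b \<Rightarrow> 'b \<Rightarrow> bool" where
  "covers P le x y \<longleftrightarrow> x \<in> P \<and> y \<in> P \<and> le x y \<and> x \<noteq> y \<and>
     \<not> (\<exists>z\<in>P. le x z \<and> le z y \<and> z \<noteq> x \<and> z \<noteq> y)"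

definition left_modular :: "'b set \<Rightarrow> ('b \<Rightarrow> 'b \<Rightarrow> bool) \<Rightarrow> 'b \<Rightarrow> bool" where
  "left_modular P le x \<longleftrightarrow> (\<forall>y\<in>P. \<forall>z\<in>P. le y z \<longrightarrow>
      join P le y (meet P le x z) = meet P le (join P le y x) z)"

definition maximal_chain :: "'b set \<Rightarrow> ('b \<Rightarrow> 'b \<Rightarrow> bool) \<Rightarrow> (nat \<Rightarrow> 'b) \<Rightarrow> nat \<Rightarrow> bool" where
  "maximal_chain P le c n \<longleftrightarrow> (\<forall>i\<le>n. c i \<in> P) \<and> (\<forall>x\<in>P. le (c 0) x) \<and> (\<forall>x\<in>P. le x (c n)) \<and>
     (\<forall>i<n. covers P le (c i) (c (Suc i)))"

definition atoms :: "'b set \<Rightarrow> ('b \<Rightarrow> 'b \<Rightarrow> bool) \<Rightarrow> 'b set" where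
  "atoms P le = {a\<in>P. \<exists>b\<in>P. (\<forall>x\<in>P. le b x) \<and> covers P le b a}"

definition level :: "('b \<Rightarrow> 'b \<Rightarrow> bool) \<Rightarrow> (nat \<Rightarrow> 'b) \<Rightarrow> 'b \<Rightarrow> nat" where
  "level le c a = (LEAST i. le a (c i))"

definition level_condition :: "'b set \<Rightarrow> ('b \<Rightarrow> 'b \<Rightarrow> bool) \<Rightarrow> (nat \<Rightarrow> 'b) \<Rightarrow> bool" where
  "level_condition P le c \<longleftrightarrow> (\<forall>k\<ge>1. \<forall>a :: nat \<Rightarrow> 'b.
      (\<forall>i\<le>k. a i \<in> atoms P le) \<and> (\<forall>i<k. level le c (a i) < level le c (a (Suc i))) \<longrightarrow>
      \<not> le (a 0) (Join P le (a ` {1..k})))"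

definition LL_lattice :: "'b set \<Rightarrow> ('b \<Rightarrow> 'b \<Rightarrow> bool) \<Rightarrow> bool" where
  "LL_lattice P le \<longleftrightarrow> finite_lattice P le \<and>
     (\<exists>c n. maximal_chain P le c n \<and> (\<forall>i\<le>n. left_modular P le (c i)) \<and> level_condition P le c)"

end

theory Submission
  imports Defs
begin

definition lcaF :: "'a set set \<Rightarrow> 'a set \<Rightarrow> 'a set" where
  "lcaF F C = \<Inter>{E\<in>F. C \<subseteq> E}"

lemma forest_parts:
  "forest I F \<Longrightarrow> (\<forall>C\<in>F. C \<noteq> {} \<and> C \<subseteq> I)"
  "forest I F \<Longrightarrow> (\<forall>i\<in>I. {i} \<in> F)"
  "forest I F \<Longrightarrow> (\<forall>C\<in>F. \<forall>D\<in>F. C \<subseteq> D \<or> D \<subseteq> C \<or> C \<inter> D = {})"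
  "forest I F \<Longrightarrow> (\<forall>C\<in>F. inner_cl C \<longrightarrow> (\<exists>A\<in>F. \<exists>B\<in>F. A \<inter> B = {} \<and> A \<union> B = C \<and> A \<noteq> C \<and> B \<noteq> C))"
  unfolding forest_def by (elim conjE, assumption)+
lemma forest_sub: "forest I F \<Longrightarrow> C \<in> F \<Longrightarrow> C \<subseteq> I"
  using forest_parts(1) by blast
lemma forest_ne: "forest I F \<Longrightarrow> C \<in> F \<Longrightarrow> C \<noteq> {}"
  using forest_parts(1) by blast
lemma forest_sing: "forest I F \<Longrightarrow> i \<in> I \<Longrightarrow> {i} \<in> F"
  using forest_parts(2) by blast
lemma forest_lam: "forest I F \<Longrightarrow> C \<in> F \<Longrightarrow> D \<in> F \<Longrightarrow> C \<inter> D \<noteq> {} \<Longrightarrow> C \<subseteq> D \<or> D \<subseteq> C"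
  using forest_parts(3) by blast
lemma forest_split: assumes "forest I F" "C \<in> F" "inner_cl C" shows
   "\<exists>A\<in>F. \<exists>B\<in>F. A \<inter> B = {} \<and> A \<union> B = C \<and> A \<noteq> C \<and> B \<noteq> C"
  using mp[OF bspec[OF forest_parts(4)[OF assms(1)] assms(2)] assms(3)] .
lemma forest_finite: "finite I \<Longrightarrow> forest I F \<Longrightarrow> finite F"
proof -
  assume "finite I" "forest I F"
  then have "F \<subseteq> Pow I" using forest_sub by blast
  then show ?thesis using \<open>finite I\<close> finite_subset by blast
qed

lemma inner_two: "inner_cl C \<Longrightarrow> C \<noteq> {} \<Longrightarrow> \<exists>a\<in>C. \<exists>b\<in>C. a \<noteq> b"
  unfolding inner_cl_def by blast
lemma two_inner: "a \<in> C \<Longrightarrow> b \<in> C \<Longrightarrow> a \<noteq> b \<Longrightarrow> inner_cl C"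
  unfolding inner_cl_def by blast
lemma not_inner: "\<not> inner_cl C \<Longrightarrow> \<exists>i. C = {i}"
  unfolding inner_cl_def by blast

lemma lcaF_props:
  assumes fin: "finite I" and f: "forest I F" and ne: "C \<noteq> {}" and E0: "E0 \<in> F" "C \<subseteq> E0"
  shows "lcaF F C \<in> F" "C \<subseteq> lcaF F C" "\<And>E. E \<in> F \<Longrightarrow> C \<subseteq> E \<Longrightarrow> lcaF F C \<subseteq> E"
proof -
  let ?M = "{E\<in>F. C \<subseteq> E}"
  have finM: "finite ?M" using forest_finite[OF fin f] by simp
  have neM: "?M \<noteq> {}" using E0 by blast
  obtain m where m: "m \<in> ?M" "\<forall>b\<in>?M. b \<subseteq> m \<longrightarrow> m = b"
    using finite_has_minimal[OF finM neM] by blast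
  have least: "\<forall>E\<in>?M. m \<subseteq> E"
  proof
    fix E assume E: "E \<in> ?M"
    have "E \<inter> m \<noteq> {}" using E m(1) ne by blast
    then have "E \<subseteq> m \<or> m \<subseteq> E" using forest_lam[OF f] E m(1) by blast
    then show "m \<subseteq> E" using m(2) E by blast
  qed
  have eq: "lcaF F C = m"
  proof (rule equalityI)
    show "lcaF F C \<subseteq> m" unfolding lcaF_def using m(1) by (rule Inter_lower)
    show "m \<subseteq> lcaF F C" unfolding lcaF_def
    proof (rule Inter_greatest)
      fix E assume "E \<in> {E \<in> F. C \<subseteq> E}" then show "m \<subseteq> E" using least by simp
    qed
  qed
  show "lcaF F C \<in> F" "C \<subseteq> lcaF F C" using eq m(1) by auto
  show "\<And>E. E \<in> F \<Longrightarrow> C \<subseteq> E \<Longrightarrow> lcaF F C \<subseteq> E" using eq least by auto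
qed

lemma lcaF_mem: "E \<in> F \<Longrightarrow> C \<subseteq> E \<Longrightarrow> lcaF F C \<subseteq> E"
  unfolding lcaF_def by blast

lemma lcaF_eqI: "X \<in> F \<Longrightarrow> C \<subseteq> X \<Longrightarrow> (\<And>E. E \<in> F \<Longrightarrow> C \<subseteq> E \<Longrightarrow> X \<subseteq> E) \<Longrightarrow> lcaF F C = X"
  unfolding lcaF_def by blast

lemma child_sub:
  assumes f: "forest I F" and AB: "A \<in> F" "B \<in> F" "A \<inter> B = {}" "A \<union> B = C"
    and E: "E \<in> F" "E \<subset> C"
  shows "E \<subseteq> A \<or> E \<subseteq> B"
proof -
  have Ene: "E \<noteq> {}" using forest_ne[OF f E(1)] .
  have AC: "A \<noteq> {}" "B \<noteq> {}" using forest_ne[OF f] AB by auto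
  show ?thesis
  proof (cases "E \<inter> A = {}")
    case True
    then have "E \<subseteq> B" using E AB by blast
    then show ?thesis by blast
  next
    case False
    then have "E \<subseteq> A \<or> A \<subseteq> E" using forest_lam[OF f E(1) AB(1)] by blast
    moreover {
      assume "A \<subseteq> E" "\<not> E \<subseteq> A"
      then have "E \<inter> B \<noteq> {}" using E AB by blast
      then have "E \<subseteq> B \<or> B \<subseteq> E" using forest_lam[OF f E(1) AB(2)] by blast
      moreover have "\<not> E \<subseteq> B" using \<open>A \<subseteq> E\<close> AC AB(3) by blast
      moreover have "\<not> B \<subseteq> E" using \<open>A \<subseteq> E\<close> AB(4) E(2) by blast
      ultimately have False by blast }
    ultimately show ?thesis by blast
  qed
qed

lemma f_edgeI: "C \<in> F \<Longrightarrow> D \<in> F \<Longrightarrow> C \<subset> D \<Longrightarrow> (\<And>E. E \<in> F \<Longrightarrow> C \<subset> E \<Longrightarrow> E \<subset> D \<Longrightarrow> False) \<Longrightarrow> f_edge F C D"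
  unfolding f_edge_def by metis
lemma f_edgeD: assumes "f_edge F C D"
  shows "C \<in> F" "D \<in> F" "C \<subset> D" "\<And>E. E \<in> F \<Longrightarrow> C \<subset> E \<Longrightarrow> E \<subset> D \<Longrightarrow> False"
  using assms unfolding f_edge_def by metis+

lemma children_edges:
  assumes f: "forest I F" and C: "C \<in> F" "inner_cl C"
  obtains A B where "f_edge F A C" "f_edge F B C" "A \<inter> B = {}" "A \<union> B = C" "A \<noteq> C" "B \<noteq> C"
    "A \<in> F" "B \<in> F"
proof -
  obtain A B where AB: "A\<in>F" "B\<in>F" "A \<inter> B = {}" "A \<union> B = C" "A \<noteq> C" "B \<noteq> C"
    using forest_split[OF f C] by blast
  have Ane: "A \<noteq> {}" "B \<noteq> {}" using forest_ne[OF f] AB(1,2) by auto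
  have "f_edge F A C"
  proof (rule f_edgeI[OF AB(1) C(1)])
    show "A \<subset> C" using AB(4,5) by blast
    fix E assume E: "E \<in> F" "A \<subset> E" "E \<subset> C"
    have "E \<subseteq> A \<or> E \<subseteq> B" using child_sub[OF f AB(1-4) E(1,3)] .
    then show False using E(2) Ane AB(3) by blast
  qed
  moreover have "f_edge F B C"
  proof (rule f_edgeI[OF AB(2) C(1)])
    show "B \<subset> C" using AB(4,6) by blast
    fix E assume E: "E \<in> F" "B \<subset> E" "E \<subset> C"
    have "E \<subseteq> A \<or> E \<subseteq> B" using child_sub[OF f AB(1-4) E(1,3)] .
    then show False using E(2) Ane AB(3) by blast
  qed
  ultimately show ?thesis using that AB by blast
qed

lemma unique_parent:
  assumes f: "forest I F" and e: "f_edge F C D" "f_edge F C D'"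
  shows "D = D'"
proof -
  note d1 = f_edgeD[OF e(1)] and d2 = f_edgeD[OF e(2)]
  have "C \<noteq> {}" using forest_ne[OF f d1(1)] .
  then have "D \<inter> D' \<noteq> {}" using d1(3) d2(3) by blast
  then have "D \<subseteq> D' \<or> D' \<subseteq> D" using forest_lam[OF f d1(2) d2(2)] by blast
  then show ?thesis
  proof
    assume "D \<subseteq> D'" show ?thesis
    proof (rule ccontr)
      assume "D \<noteq> D'" then have "D \<subset> D'" using \<open>D \<subseteq> D'\<close> by blast
      then show False using d2(4)[OF d1(2) d1(3)] by blast
    qed
  next
    assume "D' \<subseteq> D" show ?thesis
    proof (rule ccontr)
      assume "D \<noteq> D'" then have "D' \<subset> D" using \<open>D' \<subseteq> D\<close> by blast
      then show False using d1(4)[OF d2(2) d2(3)] by blast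
    qed
  qed
qed

lemma root_exists:
  assumes fin: "finite I" and f: "forest I F" and C: "C \<in> F"
  shows "\<exists>R. f_root F R \<and> C \<subseteq> R"
proof -
  let ?M = "{E\<in>F. C \<subseteq> E}"
  have finM: "finite ?M" using forest_finite[OF fin f] by simp
  have neM: "?M \<noteq> {}" using C by blast
  obtain m where m1: "m \<in> ?M" and m2: "\<forall>b\<in>?M. m \<subseteq> b \<longrightarrow> m = b"
    using finite_has_maximal[OF finM neM] by blast
  have "\<not> (\<exists>E\<in>F. m \<subset> E)"
  proof
    assume "\<exists>E\<in>F. m \<subset> E"
    then obtain E where E: "E \<in> F" "m \<subset> E" by blast
    have "E \<in> ?M" using E m1 by auto
    then show False using m2 E(2) by auto
  qed
  then have "f_root F m" unfolding f_root_def using m1 by simp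
  then show ?thesis using m1 by blast
qed


locale fle =
  fixes I :: "'a set" and F G :: "'a set set" and \<phi> :: "'a set \<Rightarrow> 'a set"
  assumes finI: "finite I" and forF: "forest I F" and forG: "forest I G"
    and img: "\<And>C. C \<in> F \<Longrightarrow> \<phi> C \<in> G"
    and emono: "\<And>C D. f_edge F C D \<Longrightarrow> \<phi> C \<subseteq> \<phi> D"
    and leaf: "\<And>i. i \<in> I \<Longrightarrow> \<phi> {i} = {i}"
    and tinj: "\<And>R. f_root F R \<Longrightarrow> inj_on \<phi> {C\<in>F. C \<subseteq> R}"
    and tedges: "\<And>R C D C' D'. f_root F R \<Longrightarrow> f_edge F C D \<Longrightarrow> f_edge F C' D' \<Longrightarrow> D \<subseteq> R \<Longrightarrow> D' \<subseteq> R
        \<Longrightarrow> (C,D) \<noteq> (C',D') \<Longrightarrow> path_edges G (\<phi> C) (\<phi> D) \<inter> path_edges G (\<phi> C') (\<phi> D') = {}"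

lemma forest_le_fle:
  assumes "finite I" "forest_le I F G"
  shows "\<exists>\<phi>. fle I F G \<phi> \<and> inj_on \<phi> {C\<in>F. inner_cl C} \<and> (\<forall>C\<in>F. inner_cl C \<longrightarrow> inner_cl (\<phi> C))"
proof -
  have fF: "forest I F" and fG: "forest I G" using assms(2) unfolding forest_le_def by simp_all
  obtain \<phi> where p: "(\<forall>C\<in>F. \<phi> C \<in> G)" "(\<forall>C D. f_edge F C D \<longrightarrow> \<phi> C \<subseteq> \<phi> D)"
     "(\<forall>C\<in>F. inner_cl C \<longrightarrow> inner_cl (\<phi> C))" "inj_on \<phi> {C\<in>F. inner_cl C}"
     "(\<forall>i\<in>I. \<phi> {i} = {i})" "(\<forall>R. f_root F R \<longrightarrow> inj_on_tree F G \<phi> R)"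
    using assms(2) unfolding forest_le_def by (elim conjE exE) assumption
  have "fle I F G \<phi>"
  proof
    show "finite I" "forest I F" "forest I G" by fact+
    show "\<And>C. C \<in> F \<Longrightarrow> \<phi> C \<in> G" using p(1) by blast
    show "\<And>C D. f_edge F C D \<Longrightarrow> \<phi> C \<subseteq> \<phi> D" using p(2) by blast
    show "\<And>i. i \<in> I \<Longrightarrow> \<phi> {i} = {i}" using p(5) by blast
    show "\<And>R. f_root F R \<Longrightarrow> inj_on \<phi> {C\<in>F. C \<subseteq> R}" using p(6) unfolding inj_on_tree_def by blast
    fix R C D C' D'
    assume "f_root F R" "f_edge F C D" "f_edge F C' D'" "D \<subseteq> R" "D' \<subseteq> R" "(C,D) \<noteq> (C',D')"
    then show "path_edges G (\<phi> C) (\<phi> D) \<inter> path_edges G (\<phi> C') (\<phi> D') = {}"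
      using p(6) unfolding inj_on_tree_def by meson
  qed
  then show ?thesis using p(3,4) by blast
qed

context fle begin

lemma sub_phi: "C \<in> F \<Longrightarrow> C \<subseteq> \<phi> C"
proof (induct "card C" arbitrary: C rule: less_induct)
  case less
  show ?case
  proof (cases "inner_cl C")
    case False
    then obtain i where i: "C = {i}" using not_inner by blast
    then have "i \<in> I" using forest_sub[OF forF less(2)] by blast
    then show ?thesis using leaf i by simp
  next
    case True
    obtain A B where AB: "f_edge F A C" "f_edge F B C" "A \<union> B = C" "A \<noteq> C" "B \<noteq> C" "A \<in> F" "B \<in> F"
      using children_edges[OF forF less(2) True] by metis
    have finC: "finite C" using forest_sub[OF forF less(2)] finI finite_subset by blast
    have "card A < card C" using AB(3,4) finC by (metis Un_upper1 psubsetI psubset_card_mono)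
    then have "A \<subseteq> \<phi> A" using less(1) AB(6) by blast
    moreover have "card B < card C" using AB(3,5) finC by (metis Un_upper2 psubsetI psubset_card_mono)
    then have "B \<subseteq> \<phi> B" using less(1) AB(7) by blast
    ultimately show ?thesis using emono[OF AB(1)] emono[OF AB(2)] AB(3) by blast
  qed
qed

lemma phi_ne: "C \<in> F \<Longrightarrow> \<phi> C \<noteq> {}"
  using forest_ne[OF forG img] by blast

lemma edge_root:
  assumes "f_edge F A C"
  obtains R where "f_root F R" "C \<subseteq> R" "A \<subseteq> R"
proof -
  have "C \<in> F" using f_edgeD[OF assms] by blast
  then obtain R where "f_root F R" "C \<subseteq> R" using root_exists[OF finI forF] by blast
  moreover have "A \<subseteq> C" using f_edgeD[OF assms] by blast
  ultimately show ?thesis using that by blast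
qed

lemma edge_strict:
  assumes "f_edge F A C" shows "\<phi> A \<subset> \<phi> C"
proof -
  obtain R where R: "f_root F R" "C \<subseteq> R" "A \<subseteq> R" using edge_root[OF assms] by blast
  have "A \<noteq> C" "A \<in> F" "C \<in> F" using f_edgeD[OF assms] by auto
  then have "\<phi> A \<noteq> \<phi> C" using tinj[OF R(1)] R unfolding inj_on_def by blast
  then show ?thesis using emono[OF assms] by blast
qed

lemma disj_children:
  assumes e: "f_edge F A C" "f_edge F B C" and AB: "A \<noteq> B"
  shows "\<phi> A \<inter> \<phi> B = {}"
proof (rule ccontr)
  assume ne: "\<phi> A \<inter> \<phi> B \<noteq> {}"
  obtain R where R: "f_root F R" "C \<subseteq> R" using edge_root[OF e(1)] by blast
  have AF: "A \<in> F" "B \<in> F" using f_edgeD e by auto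
  have lam: "\<phi> A \<subseteq> \<phi> B \<or> \<phi> B \<subseteq> \<phi> A" using forest_lam[OF forG img[OF AF(1)] img[OF AF(2)] ne] .
  have sA: "\<phi> A \<subset> \<phi> C" and sB: "\<phi> B \<subset> \<phi> C" using edge_strict e by auto
  have dis: "path_edges G (\<phi> A) (\<phi> C) \<inter> path_edges G (\<phi> B) (\<phi> C) = {}"
    using tedges[OF R(1) e(1) e(2) R(2) R(2)] AB by simp
  from lam show False
  proof
    assume "\<phi> A \<subseteq> \<phi> B"
    then have "\<phi> B \<in> path_edges G (\<phi> A) (\<phi> C) \<inter> path_edges G (\<phi> B) (\<phi> C)"
      unfolding path_edges_def using sB img[OF AF(2)] by blast
    then show False using dis by blast
  next
    assume "\<phi> B \<subseteq> \<phi> A"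
    then have "\<phi> A \<in> path_edges G (\<phi> A) (\<phi> C) \<inter> path_edges G (\<phi> B) (\<phi> C)"
      unfolding path_edges_def using sA img[OF AF(1)] by blast
    then show False using dis by blast
  qed
qed

lemma phi_least:
  assumes C: "C \<in> F" and L: "L \<in> G" "C \<subseteq> L"
  shows "\<phi> C \<subseteq> L"
proof (cases "inner_cl C")
  case False
  then obtain i where i: "C = {i}" using not_inner by blast
  then have "i \<in> I" using forest_sub[OF forF C] by blast
  then show ?thesis using leaf i L by simp
next
  case True
  obtain A B where AB: "f_edge F A C" "f_edge F B C" "A \<inter> B = {}" "A \<union> B = C" "A \<in> F" "B \<in> F"
    using children_edges[OF forF C True] by metis
  have Ane: "A \<noteq> {}" "B \<noteq> {}" using forest_ne[OF forF] AB(5,6) by auto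
  have AneB: "A \<noteq> B" using AB(3) Ane by blast
  have dAB: "\<phi> A \<inter> \<phi> B = {}" using disj_children[OF AB(1,2) AneB] .
  have sA: "A \<subseteq> \<phi> A" "B \<subseteq> \<phi> B" using sub_phi AB(5,6) by auto
  have Cne: "C \<noteq> {}" using forest_ne[OF forF C] .
  have "C \<subseteq> \<phi> C" using sub_phi[OF C] .
  then have "\<phi> C \<inter> L \<noteq> {}" using L(2) Cne by blast
  then have "\<phi> C \<subseteq> L \<or> L \<subseteq> \<phi> C" using forest_lam[OF forG img[OF C] L(1)] by blast
  then show ?thesis
  proof
    assume Lsub: "L \<subseteq> \<phi> C"
    show ?thesis
    proof (rule ccontr)
      assume nsub: "\<not> \<phi> C \<subseteq> L"
      then have Lps: "L \<subset> \<phi> C" using Lsub by blast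
      have "\<phi> A \<inter> L \<noteq> {}" using sA(1) AB(4) L(2) Ane(1) by blast
      then have "\<phi> A \<subseteq> L \<or> L \<subseteq> \<phi> A" using forest_lam[OF forG img[OF AB(5)] L(1)] by blast
      moreover have "\<not> L \<subseteq> \<phi> A" using AB(4) L(2) sA(2) dAB Ane(2) by blast
      ultimately have A1: "\<phi> A \<subseteq> L" by blast
      have "\<phi> B \<inter> L \<noteq> {}" using sA(2) AB(4) L(2) Ane(2) by blast
      then have "\<phi> B \<subseteq> L \<or> L \<subseteq> \<phi> B" using forest_lam[OF forG img[OF AB(6)] L(1)] by blast
      moreover have "\<not> L \<subseteq> \<phi> B" using AB(4) L(2) sA(1) dAB Ane(1) by blast
      ultimately have B1: "\<phi> B \<subseteq> L" by blast
      obtain R where R: "f_root F R" "C \<subseteq> R" using edge_root[OF AB(1)] by blast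
      have dis: "path_edges G (\<phi> A) (\<phi> C) \<inter> path_edges G (\<phi> B) (\<phi> C) = {}"
        using tedges[OF R(1) AB(1) AB(2) R(2) R(2)] AneB by simp
      have "L \<in> path_edges G (\<phi> A) (\<phi> C) \<inter> path_edges G (\<phi> B) (\<phi> C)"
        unfolding path_edges_def using A1 B1 Lps L(1) by blast
      then show False using dis by blast
    qed
  qed
qed

lemma phi_lca: "C \<in> F \<Longrightarrow> \<phi> C = lcaF G C"
  by (rule sym, rule lcaF_eqI[OF img sub_phi phi_least]) auto

lemma phi_mono: "C \<in> F \<Longrightarrow> C' \<in> F \<Longrightarrow> C \<subseteq> C' \<Longrightarrow> \<phi> C \<subseteq> \<phi> C'"
  using phi_least[of C "\<phi> C'"] img sub_phi by blast

lemma phi_disj_children: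
  assumes C: "C \<in> F" "inner_cl C"
  obtains A B where "A \<in> F" "B \<in> F" "A \<inter> B = {}" "A \<union> B = C" "A \<noteq> C" "B \<noteq> C" "\<phi> A \<inter> \<phi> B = {}"
    "f_edge F A C" "f_edge F B C"
proof -
  obtain A B where AB: "f_edge F A C" "f_edge F B C" "A \<inter> B = {}" "A \<union> B = C" "A \<noteq> C" "B \<noteq> C" "A \<in> F" "B \<in> F"
    using children_edges[OF forF C] by metis
  have Ane: "A \<noteq> {}" "B \<noteq> {}" using forest_ne[OF forF] AB(7,8) by auto
  have AneB: "A \<noteq> B" using AB(3) Ane by blast
  show ?thesis using that AB disj_children[OF AB(1,2) AneB] by blast
qed

lemma least_cluster:
  assumes "S \<noteq> {}" "R \<in> F" "S \<subseteq> R"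
  shows "lcaF F S \<in> F" "S \<subseteq> lcaF F S" "\<And>E. E \<in> F \<Longrightarrow> S \<subseteq> E \<Longrightarrow> lcaF F S \<subseteq> E"
  using lcaF_props[OF finI forF assms(1,2,3)] by auto

lemma restr_sub:
  assumes R: "f_root F R" and C: "C \<in> F" "C \<subseteq> R"
  shows "C = R \<inter> \<phi> C"
proof (rule ccontr)
  assume "C \<noteq> R \<inter> \<phi> C"
  then obtain a where a: "a \<in> R" "a \<in> \<phi> C" "a \<notin> C" using sub_phi[OF C(1)] C(2) by blast
  have RF: "R \<in> F" using R unfolding f_root_def by blast
  let ?S = "insert a C"
  have Sne: "?S \<noteq> {}" by blast
  have SR: "?S \<subseteq> R" using a C by blast
  note L = least_cluster[OF Sne RF SR]
  define C2 where "C2 = lcaF F ?S"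
  have C2: "C2 \<in> F" "?S \<subseteq> C2" "\<And>E. E \<in> F \<Longrightarrow> ?S \<subseteq> E \<Longrightarrow> C2 \<subseteq> E" using L unfolding C2_def by auto
  have Cne: "C \<noteq> {}" using forest_ne[OF forF C(1)] .
  obtain c where c: "c \<in> C" using Cne by blast
  have "c \<noteq> a" using c a by blast
  then have inn: "inner_cl C2" using two_inner[of c C2 a] C2(2) c by blast
  obtain A B where AB: "A \<in> F" "B \<in> F" "A \<inter> B = {}" "A \<union> B = C2" "A \<noteq> C2" "B \<noteq> C2" "\<phi> A \<inter> \<phi> B = {}"
    using phi_disj_children[OF C2(1) inn] by metis
  have CC2: "C \<subset> C2" using C2(2) a by blast
  have "C \<subseteq> A \<or> C \<subseteq> B" using child_sub[OF forF AB(1-4) C(1) CC2] .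
  then show False
  proof
    assume CA: "C \<subseteq> A"
    have "a \<notin> A"
    proof
      assume "a \<in> A" then have "?S \<subseteq> A" using CA by blast
      then have "C2 \<subseteq> A" using C2(3) AB(1) by blast
      then show False using AB(4,5) by blast
    qed
    then have aB: "a \<in> B" using C2(2) AB(4) by blast
    have "\<phi> C \<subseteq> \<phi> A" using phi_mono[OF C(1) AB(1) CA] .
    then show False using a(2) aB sub_phi[OF AB(2)] AB(7) by blast
  next
    assume CB: "C \<subseteq> B"
    have "a \<notin> B"
    proof
      assume "a \<in> B" then have "?S \<subseteq> B" using CB by blast
      then have "C2 \<subseteq> B" using C2(3) AB(2) by blast
      then show False using AB(4,6) by blast
    qed
    then have aA: "a \<in> A" using C2(2) AB(4) by blast
    have "\<phi> C \<subseteq> \<phi> B" using phi_mono[OF C(1) AB(2) CB] .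
    then show False using a(2) aA sub_phi[OF AB(1)] AB(7) by blast
  qed
qed

lemma restr_sup:
  assumes R: "f_root F R" and E: "E \<in> G" "R \<inter> E \<noteq> {}"
  shows "R \<inter> E \<in> F"
proof -
  have RF: "R \<in> F" using R unfolding f_root_def by blast
  let ?S = "R \<inter> E"
  note L = least_cluster[OF E(2) RF Int_lower1]
  define C where "C = lcaF F ?S"
  have C: "C \<in> F" "?S \<subseteq> C" "\<And>E'. E' \<in> F \<Longrightarrow> ?S \<subseteq> E' \<Longrightarrow> C \<subseteq> E'" using L unfolding C_def by auto
  have CR: "C \<subseteq> R" using C(3)[OF RF] by blast
  show ?thesis
  proof (cases "C \<subseteq> E")
    case True
    then have "C = ?S" using C(2) CR by blast
    then show ?thesis using C(1) by simp
  next
    case False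
    have inn: "inner_cl C"
    proof (rule ccontr)
      assume "\<not> inner_cl C"
      then obtain i where "C = {i}" using not_inner by blast
      then have "C \<subseteq> E" using C(2) E(2) by blast
      then show False using False by blast
    qed
    obtain A B where AB: "A \<in> F" "B \<in> F" "A \<inter> B = {}" "A \<union> B = C" "A \<noteq> C" "B \<noteq> C" "\<phi> A \<inter> \<phi> B = {}"
      using phi_disj_children[OF C(1) inn] by metis
    have "\<not> ?S \<subseteq> A"
    proof
      assume "?S \<subseteq> A" then have "C \<subseteq> A" using C(3) AB(1) by blast
      then show False using AB(4,5) by blast
    qed
    then obtain x where x: "x \<in> ?S" "x \<notin> A" by blast
    have xB: "x \<in> B" using x C(2) AB(4) by blast
    have "\<not> ?S \<subseteq> B"
    proof
      assume "?S \<subseteq> B" then have "C \<subseteq> B" using C(3) AB(2) by blast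
      then show False using AB(4,6) by blast
    qed
    then obtain y where y: "y \<in> ?S" "y \<notin> B" by blast
    have yA: "y \<in> A" using y C(2) AB(4) by blast
    have pA: "A \<subseteq> \<phi> A" "B \<subseteq> \<phi> B" using sub_phi AB(1,2) by auto
    have "\<phi> A \<inter> E \<noteq> {}" using yA y(1) pA by blast
    then have "\<phi> A \<subseteq> E \<or> E \<subseteq> \<phi> A" using forest_lam[OF forG img[OF AB(1)] E(1)] by blast
    moreover have "\<not> E \<subseteq> \<phi> A" using xB x(1) pA AB(7) by blast
    ultimately have "\<phi> A \<subseteq> E" by blast
    have "\<phi> B \<inter> E \<noteq> {}" using xB x(1) pA by blast
    then have "\<phi> B \<subseteq> E \<or> E \<subseteq> \<phi> B" using forest_lam[OF forG img[OF AB(2)] E(1)] by blast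
    moreover have "\<not> E \<subseteq> \<phi> B" using yA y(1) pA AB(7) by blast
    ultimately have "\<phi> B \<subseteq> E" by blast
    have "C \<subseteq> E" using \<open>\<phi> A \<subseteq> E\<close> \<open>\<phi> B \<subseteq> E\<close> pA AB(4) by blast
    then show ?thesis using False by blast
  qed
qed

lemma root_sub_G:
  assumes R: "f_root F R" shows "\<exists>E\<in>G. R \<subseteq> E"
  using R img sub_phi unfolding f_root_def by blast

end

locale ftree =
  fixes I :: "'a set" and T :: "'a set set"
  assumes finI: "finite I" and tr: "is_tree I T"
begin

lemma forT: "forest I T" using tr unfolding is_tree_def by simp
lemma IT: "I \<in> T" using tr unfolding is_tree_def by simp

definition lcaT :: "'a set \<Rightarrow> 'a set" where "lcaT S = lcaF T S"
definition lca2 :: "'a \<Rightarrow> 'a \<Rightarrow> 'a set" where "lca2 a b = lcaT {a, b}"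

lemma lcaT_props:
  assumes "S \<noteq> {}" "S \<subseteq> I"
  shows "lcaT S \<in> T" "S \<subseteq> lcaT S" "\<And>E. E \<in> T \<Longrightarrow> S \<subseteq> E \<Longrightarrow> lcaT S \<subseteq> E"
  using lcaF_props[OF finI forT assms(1) IT assms(2)] unfolding lcaT_def by auto

lemma lcaT_eqI: "X \<in> T \<Longrightarrow> S \<subseteq> X \<Longrightarrow> (\<And>E. E \<in> T \<Longrightarrow> S \<subseteq> E \<Longrightarrow> X \<subseteq> E) \<Longrightarrow> lcaT S = X"
  unfolding lcaT_def by (rule lcaF_eqI)

lemma lca2_props:
  assumes "a \<in> I" "b \<in> I"
  shows "lca2 a b \<in> T" "a \<in> lca2 a b" "b \<in> lca2 a b" "\<And>E. E \<in> T \<Longrightarrow> a \<in> E \<Longrightarrow> b \<in> E \<Longrightarrow> lca2 a b \<subseteq> E"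
  using lcaT_props[of "{a,b}"] assms unfolding lca2_def by auto

lemma lca2_comm: "lca2 a b = lca2 b a"
  unfolding lca2_def by (simp add: insert_commute)

lemma lca2_same: "a \<in> I \<Longrightarrow> lca2 a a = {a}"
  unfolding lca2_def by (rule lcaT_eqI) (auto intro: forest_sing[OF forT])

lemma T_sub: "D \<in> T \<Longrightarrow> D \<subseteq> I" using forest_sub[OF forT] .
lemma T_ne: "D \<in> T \<Longrightarrow> D \<noteq> {}" using forest_ne[OF forT] .
lemma T_lam: "C \<in> T \<Longrightarrow> D \<in> T \<Longrightarrow> C \<inter> D \<noteq> {} \<Longrightarrow> C \<subseteq> D \<or> D \<subseteq> C" using forest_lam[OF forT] .

lemma lca2_sing_iff: "a \<in> I \<Longrightarrow> b \<in> I \<Longrightarrow> c \<in> I \<Longrightarrow> lca2 a b = {c} \<Longrightarrow> a = c \<and> b = c"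
  using lca2_props by blast

lemma lca2_split:
  assumes D: "D \<in> T" and AB: "A \<in> T" "B \<in> T" "A \<inter> B = {}" "A \<union> B = D"
    and a: "a \<in> A" and b: "b \<in> B"
  shows "lca2 a b = D"
proof -
  have aI: "a \<in> I" "b \<in> I" using a b AB T_sub by blast+
  note L = lca2_props[OF aI]
  have sub: "lca2 a b \<subseteq> D" using L(4)[OF D] a b AB by blast
  have "lca2 a b \<inter> A \<noteq> {}" using L(2) a by blast
  then have "lca2 a b \<subseteq> A \<or> A \<subseteq> lca2 a b" using T_lam[OF L(1) AB(1)] by blast
  moreover have "\<not> lca2 a b \<subseteq> A" using L(3) b AB(3) by blast
  ultimately have "A \<subseteq> lca2 a b" by blast
  have "lca2 a b \<inter> B \<noteq> {}" using L(3) b by blast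
  then have "lca2 a b \<subseteq> B \<or> B \<subseteq> lca2 a b" using T_lam[OF L(1) AB(2)] by blast
  moreover have "\<not> lca2 a b \<subseteq> B" using L(2) a AB(3) by blast
  ultimately have "B \<subseteq> lca2 a b" by blast
  then show ?thesis using sub \<open>A \<subseteq> lca2 a b\<close> AB(4) by blast
qed

lemma ultra:
  assumes I: "u \<in> I" "v \<in> I" "w \<in> I" and ne: "lca2 u v \<noteq> lca2 v w"
  shows "lca2 u w = lca2 u v \<or> lca2 u w = lca2 v w"
proof -
  note A = lca2_props[OF I(1) I(2)] and B = lca2_props[OF I(2) I(3)] and C = lca2_props[OF I(1) I(3)]
  have "lca2 u v \<inter> lca2 v w \<noteq> {}" using A(3) B(2) by blast
  then have "lca2 u v \<subseteq> lca2 v w \<or> lca2 v w \<subseteq> lca2 u v" using T_lam[OF A(1) B(1)] by blast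
  then show ?thesis
  proof
    assume s: "lca2 u v \<subseteq> lca2 v w"
    have c1: "lca2 u w \<subseteq> lca2 v w" using C(4)[OF B(1)] s A(2) B(3) by blast
    have "lca2 u w \<inter> lca2 u v \<noteq> {}" using C(2) A(2) by blast
    then have "lca2 u w \<subseteq> lca2 u v \<or> lca2 u v \<subseteq> lca2 u w" using T_lam[OF C(1) A(1)] by blast
    then show ?thesis
    proof
      assume "lca2 u w \<subseteq> lca2 u v"
      then have "lca2 v w \<subseteq> lca2 u v" using B(4)[OF A(1)] A(3) C(3) by blast
      then show ?thesis using s ne by blast
    next
      assume "lca2 u v \<subseteq> lca2 u w"
      then have "lca2 v w \<subseteq> lca2 u w" using B(4)[OF C(1)] A(3) C(3) by blast
      then show ?thesis using c1 by blast
    qed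
  next
    assume s: "lca2 v w \<subseteq> lca2 u v"
    have c1: "lca2 u w \<subseteq> lca2 u v" using C(4)[OF A(1)] s A(2) B(3) by blast
    have "lca2 u w \<inter> lca2 v w \<noteq> {}" using C(3) B(3) by blast
    then have "lca2 u w \<subseteq> lca2 v w \<or> lca2 v w \<subseteq> lca2 u w" using T_lam[OF C(1) B(1)] by blast
    then show ?thesis
    proof
      assume "lca2 u w \<subseteq> lca2 v w"
      then have "lca2 u v \<subseteq> lca2 v w" using A(4)[OF B(1)] B(2) C(2) by blast
      then show ?thesis using s ne by blast
    next
      assume "lca2 v w \<subseteq> lca2 u w"
      then have "lca2 u v \<subseteq> lca2 u w" using A(4)[OF C(1)] B(2) C(2) by blast
      then show ?thesis using c1 by blast
    qed
  qed
qed

lemma T_children: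
  assumes D: "D \<in> T" "inner_cl D"
  obtains A B where "A \<in> T" "B \<in> T" "A \<inter> B = {}" "A \<union> B = D" "A \<noteq> D" "B \<noteq> D"
  using forest_split[OF forT D] by metis

lemma lcaT_pair:
  assumes C: "C \<subseteq> I" "a \<in> C" "b \<in> C" "a \<noteq> b"
  shows "\<exists>x\<in>C. \<exists>y\<in>C. lca2 x y = lcaT C"
proof -
  have Cne: "C \<noteq> {}" using C by blast
  note L = lcaT_props[OF Cne C(1)]
  have inn: "inner_cl (lcaT C)" using two_inner[of a "lcaT C" b] L(2) C by blast
  obtain A B where AB: "A \<in> T" "B \<in> T" "A \<inter> B = {}" "A \<union> B = lcaT C" "A \<noteq> lcaT C" "B \<noteq> lcaT C"
    using T_children[OF L(1) inn] by metis
  have "\<not> C \<subseteq> A" using L(3)[OF AB(1)] AB(4,5) by blast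
  then obtain y where y: "y \<in> C" "y \<notin> A" by blast
  have "\<not> C \<subseteq> B" using L(3)[OF AB(2)] AB(4,6) by blast
  then obtain x where x: "x \<in> C" "x \<notin> B" by blast
  have "x \<in> A" "y \<in> B" using x y L(2) AB(4) by blast+
  then have "lca2 x y = lcaT C" using lca2_split[OF L(1) AB(1-4)] by blast
  then show ?thesis using x y by blast
qed

definition valid :: "('a \<times> 'a) set \<Rightarrow> bool" where
  "valid r \<longleftrightarrow> (\<forall>a b c d. (a,b) \<in> r \<longrightarrow> (c,d) \<in> r \<longrightarrow> lca2 a b = lca2 c d \<longrightarrow> (a,c) \<in> r)"

lemma validD: "valid r \<Longrightarrow> (a,b) \<in> r \<Longrightarrow> (c,d) \<in> r \<Longrightarrow> lca2 a b = lca2 c d \<Longrightarrow> (a,c) \<in> r"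
  unfolding valid_def by blast

lemma validI: "(\<And>a b c d. (a,b) \<in> r \<Longrightarrow> (c,d) \<in> r \<Longrightarrow> lca2 a b = lca2 c d \<Longrightarrow> (a,c) \<in> r) \<Longrightarrow> valid r"
  unfolding valid_def by blast

definition V :: "('a \<times> 'a) set set" where "V = {r. equiv I r \<and> valid r}"

definition Fo :: "('a \<times> 'a) set \<Rightarrow> 'a set set" where
  "Fo r = {C. \<exists>a D. a \<in> I \<and> D \<in> T \<and> C = r``{a} \<inter> D \<and> C \<noteq> {}}"

lemma FoI: "a \<in> I \<Longrightarrow> D \<in> T \<Longrightarrow> r``{a} \<inter> D \<noteq> {} \<Longrightarrow> r``{a} \<inter> D \<in> Fo r"
  unfolding Fo_def by blast

lemma FoE: assumes "C \<in> Fo r" obtains a D where "a \<in> I" "D \<in> T" "C = r``{a} \<inter> D" "C \<noteq> {}"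
  using assms unfolding Fo_def by blast

lemma eq_class_same: "equiv I r \<Longrightarrow> x \<in> r``{a} \<Longrightarrow> r``{x} = r``{a}"
  by (metis Image_singleton_iff equiv_class_eq equiv_class_eq_iff)

lemma class_sub: "equiv I r \<Longrightarrow> r``{a} \<subseteq> I"
  unfolding equiv_def refl_on_def by blast

lemma class_self: "equiv I r \<Longrightarrow> a \<in> I \<Longrightarrow> a \<in> r``{a}"
  unfolding equiv_def refl_on_def by blast

lemma Fo_sub: "equiv I r \<Longrightarrow> C \<in> Fo r \<Longrightarrow> C \<subseteq> I"
  by (metis FoE class_sub inf.coboundedI1)

lemma Fo_S1:
  assumes r: "equiv I r" and C: "C \<in> Fo r" and x: "x \<in> C"
  shows "C = r``{x} \<inter> lcaT C"
proof -
  obtain a D where aD: "a \<in> I" "D \<in> T" "C = r``{a} \<inter> D" "C \<noteq> {}" using FoE[OF C] by blast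
  have CI: "C \<subseteq> I" using Fo_sub[OF r C] .
  note L = lcaT_props[OF aD(4) CI]
  have cl: "r``{x} = r``{a}" using eq_class_same[OF r] x aD(3) by blast
  have "lcaT C \<subseteq> D" using L(3)[OF aD(2)] aD(3) by blast
  moreover have "C \<subseteq> r``{x}" using cl aD(3) by blast
  ultimately show ?thesis using L(2) cl aD(3) by blast
qed

lemma Fo_forest:
  assumes r: "equiv I r" shows "forest I (Fo r)"
  unfolding forest_def
proof (intro conjI ballI impI)
  fix C assume C: "C \<in> Fo r"
  show "C \<noteq> {}" using C by (rule FoE) blast
  show "C \<subseteq> I" using Fo_sub[OF r C] .
next
  fix i assume i: "i \<in> I"
  have "r``{i} \<inter> {i} = {i}" using class_self[OF r i] by blast
  then show "{i} \<in> Fo r" using FoI[OF i forest_sing[OF forT i], of r] by simp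
next
  fix C D assume C: "C \<in> Fo r" and D: "D \<in> Fo r"
  show "C \<subseteq> D \<or> D \<subseteq> C \<or> C \<inter> D = {}"
  proof (cases "C \<inter> D = {}")
    case False
    then obtain x where x: "x \<in> C" "x \<in> D" by blast
    obtain a E where aE: "a \<in> I" "E \<in> T" "C = r``{a} \<inter> E" using FoE[OF C] by blast
    obtain b E' where bE: "b \<in> I" "E' \<in> T" "D = r``{b} \<inter> E'" using FoE[OF D] by blast
    have "r``{a} = r``{x}" "r``{b} = r``{x}" using eq_class_same[OF r] x aE bE by blast+
    moreover have "E \<subseteq> E' \<or> E' \<subseteq> E" using T_lam[OF aE(2) bE(2)] x aE bE by blast
    ultimately show ?thesis using aE bE by blast
  qed simp
next
  fix C assume C: "C \<in> Fo r" and inn: "inner_cl C"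
  obtain x where x: "x \<in> C" using C by (rule FoE) blast
  have CI: "C \<subseteq> I" using Fo_sub[OF r C] .
  have Cne: "C \<noteq> {}" using x by blast
  have xI: "x \<in> I" using x CI by blast
  note S1 = Fo_S1[OF r C x]
  note L = lcaT_props[OF Cne CI]
  have innW: "inner_cl (lcaT C)"
  proof -
    obtain a b where ab: "a \<in> C" "b \<in> C" "a \<noteq> b" using inner_two[OF inn Cne] by blast
    have "a \<in> lcaT C" "b \<in> lcaT C" using ab L(2) by blast+
    from this ab(3) show ?thesis by (rule two_inner)
  qed
  obtain A B where AB: "A \<in> T" "B \<in> T" "A \<inter> B = {}" "A \<union> B = lcaT C" "A \<noteq> lcaT C" "B \<noteq> lcaT C"
    using T_children[OF L(1) innW] by metis
  have nA: "\<not> C \<subseteq> A" using L(3)[OF AB(1)] AB(4,5) by blast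
  have nB: "\<not> C \<subseteq> B" using L(3)[OF AB(2)] AB(4,6) by blast
  have neA: "r``{x} \<inter> A \<noteq> {}" using nB S1 AB(4) by blast
  have neB: "r``{x} \<inter> B \<noteq> {}" using nA S1 AB(4) by blast
  have m1: "r``{x} \<inter> A \<in> Fo r" using FoI[OF xI AB(1) neA] .
  have m2: "r``{x} \<inter> B \<in> Fo r" using FoI[OF xI AB(2) neB] .
  have p: "r``{x} \<inter> A \<inter> (r``{x} \<inter> B) = {} \<and> r``{x} \<inter> A \<union> r``{x} \<inter> B = C
     \<and> r``{x} \<inter> A \<noteq> C \<and> r``{x} \<inter> B \<noteq> C"
    using AB(3,4) S1 nA nB by blast
  show "\<exists>A'\<in>Fo r. \<exists>B'\<in>Fo r. A' \<inter> B' = {} \<and> A' \<union> B' = C \<and> A' \<noteq> C \<and> B' \<noteq> C"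
  proof (rule bexI[where x="r``{x} \<inter> A"])
    show "\<exists>B'\<in>Fo r. r``{x} \<inter> A \<inter> B' = {} \<and> r``{x} \<inter> A \<union> B' = C \<and> r``{x} \<inter> A \<noteq> C \<and> B' \<noteq> C"
      using p m2 by (rule bexI[where x="r``{x} \<inter> B"])
  qed (rule m1)
qed

end

context ftree begin

lemma Fo_class: assumes "equiv I r" "a \<in> I" shows "r``{a} \<in> Fo r"
proof -
  have e: "r``{a} \<inter> I = r``{a}" using class_sub[OF assms(1)] by blast
  have "r``{a} \<inter> I \<noteq> {}" using e class_self[OF assms] by blast
  then show ?thesis using FoI[OF assms(2) IT, of r] e by simp
qed

lemma Fo_Id: "Fo (Id_on I) = forest_bot I"
proof
  show "Fo (Id_on I) \<subseteq> forest_bot I"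
  proof
    fix C assume "C \<in> Fo (Id_on I)"
    then obtain a D where "a \<in> I" "D \<in> T" "C = Id_on I``{a} \<inter> D" "C \<noteq> {}" by (rule FoE)
    then show "C \<in> forest_bot I" unfolding forest_bot_def by auto
  qed
  show "forest_bot I \<subseteq> Fo (Id_on I)"
  proof
    fix C assume "C \<in> forest_bot I"
    then obtain a where a: "a \<in> I" "C = {a}" unfolding forest_bot_def by blast
    have "Id_on I``{a} \<inter> {a} = {a}" using a by auto
    then show "C \<in> Fo (Id_on I)" using FoI[OF a(1) forest_sing[OF forT a(1)], of "Id_on I"] a by simp
  qed
qed

lemma Fo_top: "Fo (I \<times> I) = T"
proof
  show "Fo (I \<times> I) \<subseteq> T"
  proof
    fix C assume "C \<in> Fo (I \<times> I)"
    then obtain a D where aD: "a \<in> I" "D \<in> T" "C = (I \<times> I)``{a} \<inter> D" by (rule FoE)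
    then have "C = D" using T_sub[OF aD(2)] by auto
    then show "C \<in> T" using aD by simp
  qed
  show "T \<subseteq> Fo (I \<times> I)"
  proof
    fix D assume D: "D \<in> T"
    then obtain a where a: "a \<in> D" using T_ne by blast
    have aI: "a \<in> I" using a T_sub[OF D] by blast
    have "(I \<times> I)``{a} \<inter> D = D" using T_sub[OF D] aI by auto
    then show "D \<in> Fo (I \<times> I)" using FoI[OF aI D, of "I \<times> I"] a by auto
  qed
qed

lemma Fo_root:
  assumes r: "equiv I r"
  shows "f_root (Fo r) R \<longleftrightarrow> (\<exists>a\<in>I. R = r``{a})"
proof
  assume R: "f_root (Fo r) R"
  then have RF: "R \<in> Fo r" unfolding f_root_def by blast
  then obtain a D where aD: "a \<in> I" "D \<in> T" "R = r``{a} \<inter> D" "R \<noteq> {}" by (rule FoE)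
  have "r``{a} \<in> Fo r" using Fo_class[OF r aD(1)] .
  moreover have "R \<subseteq> r``{a}" using aD by blast
  ultimately have "R = r``{a}" using R unfolding f_root_def by blast
  then show "\<exists>a\<in>I. R = r``{a}" using aD(1) by blast
next
  assume "\<exists>a\<in>I. R = r``{a}"
  then obtain a where a: "a \<in> I" "R = r``{a}" by blast
  have "R \<in> Fo r" using Fo_class[OF r a(1)] a by simp
  moreover have "\<not> (\<exists>E\<in>Fo r. R \<subset> E)"
  proof
    assume "\<exists>E\<in>Fo r. R \<subset> E"
    then obtain E where E: "E \<in> Fo r" "R \<subset> E" by blast
    obtain b D where bD: "b \<in> I" "D \<in> T" "E = r``{b} \<inter> D" using E(1) by (elim FoE) blast
    have "a \<in> E" using E(2) a class_self[OF r a(1)] by blast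
    then have "r``{b} = r``{a}" using eq_class_same[OF r, of a b] bD by blast
    then have "E \<subseteq> R" using bD a by blast
    then show False using E(2) by blast
  qed
  ultimately show "f_root (Fo r) R" unfolding f_root_def by blast
qed

lemma Fo_classes_sub:
  assumes r: "equiv I r" and C: "C \<in> Fo r" and x: "x \<in> C"
  shows "C \<subseteq> r``{x}"
  using Fo_S1[OF r C x] by blast

lemma lca_sing: "i \<in> I \<Longrightarrow> forest I G \<Longrightarrow> lcaF G {i} = {i}"
  by (rule lcaF_eqI) (auto intro: forest_sing)

lemma le_Fo:
  assumes r: "equiv I r" "valid r" and s: "equiv I s" and rs: "r \<subseteq> s"
  shows "forest_le I (Fo r) (Fo s)"
proof -
  let ?F = "Fo r" and ?G = "Fo s"
  define \<phi> where "\<phi> = lcaF ?G"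
  have fF: "forest I ?F" using Fo_forest[OF r(1)] .
  have fG: "forest I ?G" using Fo_forest[OF s] .
  have cls: "\<And>x. x \<in> I \<Longrightarrow> r``{x} \<subseteq> s``{x}" using rs by blast
  have Cprops: "\<And>C x. C \<in> ?F \<Longrightarrow> x \<in> C \<Longrightarrow> \<phi> C \<in> ?G \<and> C \<subseteq> \<phi> C \<and> (\<forall>E\<in>?G. C \<subseteq> E \<longrightarrow> \<phi> C \<subseteq> E)"
  proof -
    fix C x assume C: "C \<in> ?F" and x: "x \<in> C"
    have xI: "x \<in> I" using Fo_sub[OF r(1) C] x by blast
    have "C \<subseteq> s``{x}" using Fo_classes_sub[OF r(1) C x] cls[OF xI] by blast
    moreover have "s``{x} \<in> ?G" using Fo_class[OF s xI] .
    ultimately show "\<phi> C \<in> ?G \<and> C \<subseteq> \<phi> C \<and> (\<forall>E\<in>?G. C \<subseteq> E \<longrightarrow> \<phi> C \<subseteq> E)"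
      using lcaF_props[OF finI fG _ _, of C "s``{x}"] x unfolding \<phi>_def by blast
  qed
  have Cne: "\<And>C. C \<in> ?F \<Longrightarrow> \<exists>x. x \<in> C" using forest_ne[OF fF] by blast
  have img: "\<And>C. C \<in> ?F \<Longrightarrow> \<phi> C \<in> ?G" using Cprops Cne by blast
  have subphi: "\<And>C. C \<in> ?F \<Longrightarrow> C \<subseteq> \<phi> C" using Cprops Cne by blast
  have least: "\<And>C E. C \<in> ?F \<Longrightarrow> E \<in> ?G \<Longrightarrow> C \<subseteq> E \<Longrightarrow> \<phi> C \<subseteq> E" using Cprops Cne by blast
  have mono: "\<And>C D. C \<in> ?F \<Longrightarrow> D \<in> ?F \<Longrightarrow> C \<subseteq> D \<Longrightarrow> \<phi> C \<subseteq> \<phi> D"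
    using least img subphi by blast
  have CI: "\<And>C. C \<in> ?F \<Longrightarrow> C \<subseteq> I" using Fo_sub[OF r(1)] .
  have S2: "\<And>C x. C \<in> ?F \<Longrightarrow> x \<in> C \<Longrightarrow> \<phi> C \<subseteq> s``{x} \<inter> lcaT C \<and> lcaT (\<phi> C) = lcaT C"
  proof -
    fix C x assume C: "C \<in> ?F" and x: "x \<in> C"
    have xI: "x \<in> I" using CI[OF C] x by blast
    have CneE: "C \<noteq> {}" using x by blast
    note LC = lcaT_props[OF CneE CI[OF C]]
    have "s``{x} \<inter> lcaT C \<in> ?G" using FoI[OF xI LC(1), of s] LC(2) x class_self[OF s xI] by blast
    moreover have "C \<subseteq> s``{x} \<inter> lcaT C" using Fo_classes_sub[OF r(1) C x] cls[OF xI] LC(2) by blast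
    ultimately have a: "\<phi> C \<subseteq> s``{x} \<inter> lcaT C" using least[OF C] by blast
    have pI: "\<phi> C \<subseteq> I" using Fo_sub[OF s img[OF C]] .
    have pne: "\<phi> C \<noteq> {}" using subphi[OF C] x by blast
    note LP = lcaT_props[OF pne pI]
    have "lcaT (\<phi> C) \<subseteq> lcaT C" using LP(3)[OF LC(1)] a by blast
    moreover have "lcaT C \<subseteq> lcaT (\<phi> C)" using LC(3)[OF LP(1)] LP(2) subphi[OF C] by blast
    ultimately show "\<phi> C \<subseteq> s``{x} \<inter> lcaT C \<and> lcaT (\<phi> C) = lcaT C" using a by blast
  qed
  have S3: "\<And>a E. a \<in> I \<Longrightarrow> E \<in> ?G \<Longrightarrow> r``{a} \<inter> E \<noteq> {} \<Longrightarrow> r``{a} \<inter> E \<in> ?F"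
  proof -
    fix a E assume a: "a \<in> I" and E: "E \<in> ?G" and ne: "r``{a} \<inter> E \<noteq> {}"
    obtain b D where bD: "b \<in> I" "D \<in> T" "E = s``{b} \<inter> D" using E by (elim FoE) blast
    obtain y where y: "y \<in> r``{a}" "y \<in> E" using ne by blast
    have yI: "y \<in> I" using y class_sub[OF r(1)] by blast
    have "s``{b} = s``{y}" using eq_class_same[OF s, of y b] y bD by blast
    moreover have "r``{a} = r``{y}" using eq_class_same[OF r(1), of y a] y by simp
    ultimately have "r``{a} \<subseteq> s``{b}" using cls[OF yI] by simp
    then have "r``{a} \<inter> E = r``{a} \<inter> D" using bD by blast
    then show "r``{a} \<inter> E \<in> ?F" using FoI[OF a bD(2), of r] ne by simp
  qed
  have PK: "\<And>C x. C \<in> ?F \<Longrightarrow> x \<in> C \<Longrightarrow> r``{x} \<inter> \<phi> C = C"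
  proof -
    fix C x assume C: "C \<in> ?F" and x: "x \<in> C"
    have "r``{x} \<inter> \<phi> C \<subseteq> r``{x} \<inter> lcaT C" using S2[OF C x] by blast
    also have "... = C" using Fo_S1[OF r(1) C x] by simp
    finally show "r``{x} \<inter> \<phi> C = C" using Fo_classes_sub[OF r(1) C x] subphi[OF C] by blast
  qed
  show ?thesis
    unfolding forest_le_def
  proof (intro conjI exI[where x=\<phi>] allI impI ballI)
    show "forest I ?F" "forest I ?G" by fact+
    show "\<And>C. C \<in> ?F \<Longrightarrow> \<phi> C \<in> ?G" using img .
    fix C D assume "f_edge ?F C D"
    then show "\<phi> C \<subseteq> \<phi> D" using mono f_edgeD by blast
  next
    fix C assume C: "C \<in> ?F" and inn: "inner_cl C"
    obtain a b where ab: "a \<in> C" "b \<in> C" "a \<noteq> b" using inner_two[OF inn forest_ne[OF fF C]] by blast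
    have "a \<in> \<phi> C" "b \<in> \<phi> C" using ab subphi[OF C] by blast+
    from this ab(3) show "inner_cl (\<phi> C)" by (rule two_inner)
  next
    show "inj_on \<phi> {C \<in> ?F. inner_cl C}"
    proof (rule inj_onI)
      fix C C' assume C: "C \<in> {C \<in> ?F. inner_cl C}" and C': "C' \<in> {C \<in> ?F. inner_cl C}" and eq: "\<phi> C = \<phi> C'"
      obtain a b where ab: "a \<in> C" "b \<in> C" "a \<noteq> b" using C inner_two forest_ne[OF fF] by blast
      obtain a' b' where ab': "a' \<in> C'" "b' \<in> C'" "a' \<noteq> b'" using C' inner_two forest_ne[OF fF] by blast
      have CF: "C \<in> ?F" "C' \<in> ?F" using C C' by auto
      obtain x y where xy: "x \<in> C" "y \<in> C" "lca2 x y = lcaT C" using lcaT_pair[OF CI[OF CF(1)] ab] by blast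
      obtain x' y' where xy': "x' \<in> C'" "y' \<in> C'" "lca2 x' y' = lcaT C'" using lcaT_pair[OF CI[OF CF(2)] ab'] by blast
      have "lcaT C = lcaT C'" using S2[OF CF(1) ab(1)] S2[OF CF(2) ab'(1)] eq by metis
      moreover have "(x,y) \<in> r" using Fo_classes_sub[OF r(1) CF(1) xy(1)] xy(2) by blast
      moreover have "(x',y') \<in> r" using Fo_classes_sub[OF r(1) CF(2) xy'(1)] xy'(2) by blast
      ultimately have "(x,x') \<in> r" using validD[OF r(2)] xy xy' by metis
      then have "r``{x} = r``{x'}" using eq_class_same[OF r(1), of x' x] by auto
      then show "C = C'" using Fo_S1[OF r(1) CF(1) xy(1)] Fo_S1[OF r(1) CF(2) xy'(1)] \<open>lcaT C = lcaT C'\<close> by simp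
    qed
  next
    fix i assume "i \<in> I"
    then show "\<phi> {i} = {i}" unfolding \<phi>_def using lca_sing[OF _ fG] by blast
  next
    fix R assume "f_root ?F R"
    then obtain a where a: "a \<in> I" "R = r``{a}" using Fo_root[OF r(1)] by blast
    have Rcl: "\<And>C x. C \<in> ?F \<Longrightarrow> C \<subseteq> R \<Longrightarrow> x \<in> C \<Longrightarrow> r``{x} = R"
      using a eq_class_same[OF r(1)] by blast
    have RD: "\<And>D. D \<in> ?F \<Longrightarrow> D \<subseteq> R \<Longrightarrow> R \<inter> \<phi> D = D"
      using PK Rcl Cne by metis
    have X: "\<And>E C. E \<in> ?G \<Longrightarrow> C \<in> ?F \<Longrightarrow> C \<subseteq> R \<Longrightarrow> C \<subseteq> E \<Longrightarrow> R \<inter> E \<in> ?F"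
    proof -
      fix E C assume "E \<in> ?G" "C \<in> ?F" "C \<subseteq> R" "C \<subseteq> E"
      moreover obtain x where "x \<in> C" using Cne \<open>C \<in> ?F\<close> by blast
      ultimately show "R \<inter> E \<in> ?F" using S3[OF a(1)] a(2) by blast
    qed
    show "inj_on_tree ?F ?G \<phi> R"
      unfolding inj_on_tree_def
    proof (intro conjI allI impI)
      show "inj_on \<phi> {C \<in> ?F. C \<subseteq> R}"
      proof (rule inj_onI)
        fix C C' assume C: "C \<in> {C \<in> ?F. C \<subseteq> R}" and C': "C' \<in> {C \<in> ?F. C \<subseteq> R}" and eq: "\<phi> C = \<phi> C'"
        obtain x where x: "x \<in> C" using Cne C by blast
        obtain x' where x': "x' \<in> C'" using Cne C' by blast
        have "lcaT C = lcaT C'" using S2[of C x] S2[of C' x'] C C' x x' eq by auto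
        moreover have "r``{x} = R" "r``{x'} = R" using Rcl C C' x x' by auto
        ultimately show "C = C'" using Fo_S1[OF r(1) _ x, of ] Fo_S1[OF r(1) _ x'] C C' by auto
      qed
    next
      fix C D C'
      assume h: "f_edge ?F C D \<and> D \<subseteq> R \<and> C' \<in> ?F \<and> C' \<subseteq> R"
      note e = f_edgeD[of ?F C D]
      have CD: "C \<in> ?F" "D \<in> ?F" "C \<subset> D" using h e by auto
      show "\<phi> C' \<notin> path_inner ?G (\<phi> C) (\<phi> D)"
      proof
        assume "\<phi> C' \<in> path_inner ?G (\<phi> C) (\<phi> D)"
        then have p: "\<phi> C \<subset> \<phi> C'" "\<phi> C' \<subset> \<phi> D" unfolding path_inner_def by auto
        have XF: "R \<inter> \<phi> C' \<in> ?F" using X[OF img[of C'] _ _ subphi[of C']] h by blast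
        have CX: "C \<subseteq> R \<inter> \<phi> C'" using h CD subphi[OF CD(1)] p by blast
        have XD: "R \<inter> \<phi> C' \<subseteq> D" using RD[OF CD(2)] h p by blast
        have "R \<inter> \<phi> C' = C \<or> R \<inter> \<phi> C' = D"
        proof (rule ccontr)
          assume "\<not> (R \<inter> \<phi> C' = C \<or> R \<inter> \<phi> C' = D)"
          then show False using e(4)[OF _ XF] h CX XD by blast
        qed
        then show False
        proof
          assume "R \<inter> \<phi> C' = C"
          then have "C' \<subseteq> C" using h subphi[of C'] by blast
          then have "\<phi> C' \<subseteq> \<phi> C" using mono[OF _ CD(1)] h by blast
          then show False using p by blast
        next
          assume "R \<inter> \<phi> C' = D"
          then have "D \<subseteq> \<phi> C'" by blast
          then have "\<phi> D \<subseteq> \<phi> C'" using least[OF CD(2) img[of C']] h by blast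
          then show False using p by blast
        qed
      qed
    next
      fix C D C' D'
      assume h: "f_edge ?F C D \<and> f_edge ?F C' D' \<and> D \<subseteq> R \<and> D' \<subseteq> R \<and> (C, D) \<noteq> (C', D')"
      note e = f_edgeD[of ?F C D] and e' = f_edgeD[of ?F C' D']
      have CD: "C \<in> ?F" "D \<in> ?F" "C \<subset> D" "C' \<in> ?F" "D' \<in> ?F" "C' \<subset> D'" using h e e' by auto
      have key: "\<And>C D E. f_edge ?F C D \<Longrightarrow> D \<subseteq> R \<Longrightarrow> E \<in> path_edges ?G (\<phi> C) (\<phi> D) \<Longrightarrow> R \<inter> E = C"
      proof -
        fix C D E assume ed: "f_edge ?F C D" and DR: "D \<subseteq> R" and E: "E \<in> path_edges ?G (\<phi> C) (\<phi> D)"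
        note ee = f_edgeD[OF ed]
        have Ep: "E \<in> ?G" "\<phi> C \<subseteq> E" "E \<subset> \<phi> D" using E unfolding path_edges_def by auto
        have CR: "C \<subseteq> R" using ee(3) DR by blast
        have XF: "R \<inter> E \<in> ?F" using X[OF Ep(1) ee(1) CR] subphi[OF ee(1)] Ep(2) by blast
        have CX: "C \<subseteq> R \<inter> E" using CR subphi[OF ee(1)] Ep(2) by blast
        have XD: "R \<inter> E \<subseteq> D" using RD[OF ee(2) DR] Ep(3) by blast
        have nD: "R \<inter> E \<noteq> D"
        proof
          assume "R \<inter> E = D" then have "D \<subseteq> E" by blast
          then have "\<phi> D \<subseteq> E" using least[OF ee(2) Ep(1)] by blast
          then show False using Ep(3) by blast
        qed
        show "R \<inter> E = C"
        proof (rule ccontr)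
          assume "R \<inter> E \<noteq> C"
          then show False using ee(4)[OF XF] CX XD nD by blast
        qed
      qed
      have dis: "path_edges ?G (\<phi> C) (\<phi> D) \<inter> path_edges ?G (\<phi> C') (\<phi> D') = {}"
      proof (rule ccontr)
        assume "path_edges ?G (\<phi> C) (\<phi> D) \<inter> path_edges ?G (\<phi> C') (\<phi> D') \<noteq> {}"
        then obtain E where E: "E \<in> path_edges ?G (\<phi> C) (\<phi> D)" "E \<in> path_edges ?G (\<phi> C') (\<phi> D')" by blast
        have "C = C'" using key[OF _ _ E(1)] key[OF _ _ E(2)] h by metis
        then have "D = D'" using unique_parent[OF fF] h by blast
        then show False using h \<open>C = C'\<close> by blast
      qed
      show "path_edges ?G (\<phi> C) (\<phi> D) \<inter> path_edges ?G (\<phi> C') (\<phi> D') = {}" using dis .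
      show "path_inner ?G (\<phi> C) (\<phi> D) \<inter> path_inner ?G (\<phi> C') (\<phi> D') = {}"
        using dis unfolding path_inner_def path_edges_def by blast
    qed
  qed
qed

end

context ftree begin

lemma V_equiv: "r \<in> V \<Longrightarrow> equiv I r" unfolding V_def by blast
lemma V_valid: "r \<in> V \<Longrightarrow> valid r" unfolding V_def by blast

lemma Id_valid: "valid (Id_on I)"
proof (rule validI)
  fix a b c d assume "(a,b) \<in> Id_on I" "(c,d) \<in> Id_on I" "lca2 a b = lca2 c d"
  then show "(a,c) \<in> Id_on I" using lca2_same by auto
qed

lemma Id_V: "Id_on I \<in> V" unfolding V_def using Id_valid equiv_def refl_on_def sym_def trans_def by fastforce

lemma top_valid: "valid (I \<times> I)"
proof (rule validI)
  fix a b c d assume "(a,b) \<in> I \<times> I" "(c,d) \<in> I \<times> I"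
  then show "(a,c) \<in> I \<times> I" by blast
qed

lemma top_V: "I \<times> I \<in> V" unfolding V_def using top_valid equiv_def refl_on_def sym_def trans_def by fastforce

lemma V_sub: "r \<in> V \<Longrightarrow> r \<subseteq> I \<times> I"
  using V_equiv unfolding equiv_def refl_on_def by blast

lemma V_Id: "r \<in> V \<Longrightarrow> Id_on I \<subseteq> r"
  using V_equiv unfolding equiv_def refl_on_def by blast

lemma le_Fo_iff:
  assumes r: "r \<in> V" and s: "s \<in> V"
  shows "forest_le I (Fo r) (Fo s) \<longleftrightarrow> r \<subseteq> s"
proof
  assume le: "forest_le I (Fo r) (Fo s)"
  obtain \<phi> where "fle I (Fo r) (Fo s) \<phi>" using forest_le_fle[OF finI le] by blast
  then interpret fle I "Fo r" "Fo s" \<phi> .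
  show "r \<subseteq> s"
  proof
    fix p assume p: "p \<in> r"
    obtain a b where ab: "p = (a,b)" by (cases p)
    have er: "equiv I r" and es: "equiv I s" using V_equiv r s by auto
    have aI: "a \<in> I" using p ab V_sub[OF r] by blast
    have K: "r``{a} \<in> Fo r" using Fo_class[OF er aI] .
    have "r``{a} \<subseteq> \<phi> (r``{a})" using sub_phi[OF K] .
    moreover have "\<phi> (r``{a}) \<in> Fo s" using img[OF K] .
    then obtain c D where cD: "c \<in> I" "D \<in> T" "\<phi> (r``{a}) = s``{c} \<inter> D" by (elim FoE) blast
    ultimately have "a \<in> s``{c}" "b \<in> s``{c}" using p ab class_self[OF er aI] by auto
    then show "p \<in> s" using ab es unfolding equiv_def sym_def trans_def by blast
  qed
next
  assume "r \<subseteq> s"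
  then show "forest_le I (Fo r) (Fo s)" using le_Fo V_equiv V_valid r s by blast
qed

lemma Fo_inj: "inj_on Fo V"
proof (rule inj_onI)
  fix r s assume r: "r \<in> V" and s: "s \<in> V" and eq: "Fo r = Fo s"
  have "forest_le I (Fo r) (Fo r)" using le_Fo_iff[OF r r] by simp
  then have "r \<subseteq> s" "s \<subseteq> r" using le_Fo_iff[OF r s] le_Fo_iff[OF s r] eq by auto
  then show "r = s" by blast
qed

lemma interval_sup: "Fo ` V \<subseteq> forest_interval I T"
proof
  fix F assume "F \<in> Fo ` V"
  then obtain r where r: "r \<in> V" "F = Fo r" by blast
  have "forest_le I (Fo (Id_on I)) (Fo r)" using le_Fo_iff[OF Id_V r(1)] V_Id[OF r(1)] by simp
  moreover have "forest_le I (Fo r) (Fo (I \<times> I))" using le_Fo_iff[OF r(1) top_V] V_sub[OF r(1)] by simp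
  ultimately show "F \<in> forest_interval I T" unfolding forest_interval_def using Fo_Id Fo_top r by simp
qed

lemma roots_share:
  assumes f: "forest I F" and R: "f_root F R" "f_root F R'" and a: "a \<in> R" "a \<in> R'"
  shows "R = R'"
proof -
  have "R \<in> F" "R' \<in> F" using R unfolding f_root_def by auto
  then have "R \<subseteq> R' \<or> R' \<subseteq> R" using forest_lam[OF f] a by blast
  then show ?thesis using R unfolding f_root_def by blast
qed

lemma interval_sub: "forest_interval I T \<subseteq> Fo ` V"
proof
  fix F assume "F \<in> forest_interval I T"
  then have le: "forest_le I F T" unfolding forest_interval_def by blast
  obtain \<phi> where fl: "fle I F T \<phi>" and injI: "inj_on \<phi> {C\<in>F. inner_cl C}"
    using forest_le_fle[OF finI le] by blast
  interpret fle I F T \<phi> by (rule fl)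
  define r where "r = {(a,b). \<exists>R. f_root F R \<and> a \<in> R \<and> b \<in> R}"
  have rootF: "\<And>R. f_root F R \<Longrightarrow> R \<in> F" unfolding f_root_def by blast
  have rootI: "\<And>R. f_root F R \<Longrightarrow> R \<subseteq> I" using forest_sub[OF forF] rootF by blast
  have ex_root: "\<And>a. a \<in> I \<Longrightarrow> \<exists>R. f_root F R \<and> a \<in> R"
    using root_exists[OF finI forF forest_sing[OF forF]] by blast
  have cls: "\<And>a R. f_root F R \<Longrightarrow> a \<in> R \<Longrightarrow> r``{a} = R"
  proof -
    fix a R assume R: "f_root F R" "a \<in> R"
    show "r``{a} = R"
    proof
      show "r``{a} \<subseteq> R" unfolding r_def using roots_share[OF forF R(1)] R(2) by blast
      show "R \<subseteq> r``{a}" unfolding r_def using R by blast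
    qed
  qed
  have er: "equiv I r"
    unfolding equiv_def refl_on_def sym_def trans_def
  proof (intro conjI allI impI ballI)
    show "r \<subseteq> I \<times> I" unfolding r_def using rootI by blast
    fix x assume "x \<in> I" then show "(x,x) \<in> r" unfolding r_def using ex_root by blast
  next
    fix x y assume "(x,y) \<in> r" then show "(y,x) \<in> r" unfolding r_def by blast
  next
    fix x y z assume "(x,y) \<in> r" "(y,z) \<in> r" then show "(x,z) \<in> r"
      unfolding r_def using roots_share[OF forF] by blast
  qed
  have FFo: "F = Fo r"
  proof
    show "F \<subseteq> Fo r"
    proof
      fix C assume C: "C \<in> F"
      obtain R where R: "f_root F R" "C \<subseteq> R" using root_exists[OF finI forF C] by blast
      obtain x where x: "x \<in> C" using forest_ne[OF forF C] by blast
      have xI: "x \<in> I" using x forest_sub[OF forF C] by blast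
      have "C = R \<inter> \<phi> C" using restr_sub[OF R(1) C R(2)] .
      moreover have "r``{x} = R" using cls[OF R(1)] x R(2) by blast
      ultimately have "C = r``{x} \<inter> \<phi> C" by simp
      then show "C \<in> Fo r" using FoI[OF xI img[OF C], of r] x by auto
    qed
    show "Fo r \<subseteq> F"
    proof
      fix C assume "C \<in> Fo r"
      then obtain a D where aD: "a \<in> I" "D \<in> T" "C = r``{a} \<inter> D" "C \<noteq> {}" by (elim FoE) blast
      obtain R where R: "f_root F R" "a \<in> R" using ex_root[OF aD(1)] by blast
      have "r``{a} = R" using cls[OF R] .
      then show "C \<in> F" using restr_sup[OF R(1) aD(2)] aD by simp
    qed
  qed
  have vr: "valid r"
  proof (rule validI)
    fix a b c d assume ab: "(a,b) \<in> r" and cd: "(c,d) \<in> r" and eq: "lca2 a b = lca2 c d"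
    obtain R where R: "f_root F R" "a \<in> R" "b \<in> R" using ab unfolding r_def by blast
    obtain R' where R': "f_root F R'" "c \<in> R'" "d \<in> R'" using cd unfolding r_def by blast
    have I4: "a \<in> I" "b \<in> I" "c \<in> I" "d \<in> I" using R R' rootI by blast+
    show "(a,c) \<in> r"
    proof (cases "a = b")
      case True
      then have "lca2 c d = {a}" using lca2_same[OF I4(1)] eq by simp
      then have "c = a" using lca2_props(2)[OF I4(3,4)] by auto
      then show ?thesis using er I4 unfolding equiv_def refl_on_def by blast
    next
      case False
      have cd_ne: "c \<noteq> d"
      proof
        assume "c = d"
        then have "lca2 a b = {c}" using lca2_same[OF I4(3)] eq by simp
        then show False using lca2_props(2,3)[OF I4(1,2)] False by auto
      qed
      define W where "W = lca2 a b"
      note LW = lca2_props(1-3)[OF I4(1,2)]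
      note LW' = lca2_props(1-3)[OF I4(3,4)]
      note LW4 = lca2_props(4)[OF I4(1,2)]
      note LW4' = lca2_props(4)[OF I4(3,4)]
      have WT: "W \<in> T" using LW unfolding W_def by blast
      have X1: "R \<inter> W \<in> F" using restr_sup[OF R(1) WT] R LW unfolding W_def by blast
      have X2: "R' \<inter> W \<in> F" using restr_sup[OF R'(1) WT] R' LW' eq unfolding W_def by blast
      have p1: "\<phi> (R \<inter> W) = W"
        unfolding phi_lca[OF X1]
        by (rule lcaF_eqI[OF WT]) (use R LW LW4 W_def in auto)
      have p2: "\<phi> (R' \<inter> W) = W"
        unfolding phi_lca[OF X2]
        by (rule lcaF_eqI[OF WT]) (use R' LW' LW4' W_def eq in auto)
      have i1: "inner_cl (R \<inter> W)"
      proof -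
        have "a \<in> R \<inter> W" "b \<in> R \<inter> W" using R LW W_def by auto
        from this False show ?thesis by (rule two_inner)
      qed
      have i2: "inner_cl (R' \<inter> W)"
      proof -
        have "c \<in> R' \<inter> W" "d \<in> R' \<inter> W" using R' LW' W_def eq by auto
        from this cd_ne show ?thesis by (rule two_inner)
      qed
      have "R \<inter> W = R' \<inter> W" using injI X1 X2 i1 i2 p1 p2 unfolding inj_on_def by blast
      then have "a \<in> R'" using R LW W_def by blast
      then have "R = R'" using roots_share[OF forF R(1) R'(1) R(2)] by blast
      then show ?thesis unfolding r_def using R R' by blast
    qed
  qed
  have "r \<in> V" unfolding V_def using er vr by blast
  then show "F \<in> Fo ` V" using FFo by blast
qed

lemma interval_eq: "forest_interval I T = Fo ` V"
  using interval_sub interval_sup by blast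

end

lemma trancl_least: "r \<subseteq> s \<Longrightarrow> trans s \<Longrightarrow> r\<^sup>+ \<subseteq> s"
  using trancl_mono_subset[of r s] trancl_id[of s] by simp

lemma trancl_absorb: "(A \<union> B)\<^sup>+ = (A\<^sup>+ \<union> B)\<^sup>+"
proof
  show "(A \<union> B)\<^sup>+ \<subseteq> (A\<^sup>+ \<union> B)\<^sup>+" by (rule trancl_mono_subset) auto
  have "A\<^sup>+ \<union> B \<subseteq> (A \<union> B)\<^sup>+" using trancl_mono_subset[of A "A \<union> B"] by auto
  then show "(A\<^sup>+ \<union> B)\<^sup>+ \<subseteq> (A \<union> B)\<^sup>+" using trancl_least[of _ "(A \<union> B)\<^sup>+"] trans_trancl by blast
qed

lemma cross_step: "(Q (a::nat) \<noteq> Q b) \<Longrightarrow> a \<le> b \<Longrightarrow> \<exists>l. a \<le> l \<and> l < b \<and> Q l \<noteq> Q (Suc l)"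
proof (induct b)
  case 0 then show ?case by simp
next
  case (Suc b)
  show ?case
  proof (cases "Q a = Q b \<or> a = Suc b")
    case True
    then show ?thesis using Suc by (metis le_Suc_eq lessI)
  next
    case False
    then have "a \<le> b" using Suc(3) by simp
    then show ?thesis using Suc False by (metis less_SucI)
  qed
qed

context ftree begin

lemma equivD: assumes "equiv I r"
  shows "r \<subseteq> I \<times> I" "\<And>a. a \<in> I \<Longrightarrow> (a,a) \<in> r" "\<And>a b. (a,b) \<in> r \<Longrightarrow> (b,a) \<in> r"
    "\<And>a b c. (a,b) \<in> r \<Longrightarrow> (b,c) \<in> r \<Longrightarrow> (a,c) \<in> r"
  using assms unfolding equiv_def refl_on_def sym_def trans_def by blast+

lemma equivI': "r \<subseteq> I \<times> I \<Longrightarrow> (\<And>a. a \<in> I \<Longrightarrow> (a,a) \<in> r) \<Longrightarrow> (\<And>a b. (a,b) \<in> r \<Longrightarrow> (b,a) \<in> r) \<Longrightarrow>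
    (\<And>a b c. (a,b) \<in> r \<Longrightarrow> (b,c) \<in> r \<Longrightarrow> (a,c) \<in> r) \<Longrightarrow> equiv I r"
  unfolding equiv_def refl_on_def sym_def trans_def by blast

lemma finV: "finite V"
proof -
  have "V \<subseteq> Pow (I \<times> I)" using V_sub by blast
  then show ?thesis using finI finite_subset by blast
qed

lemma Inter_V: assumes "\<T> \<subseteq> V" "\<T> \<noteq> {}" shows "\<Inter>\<T> \<in> V"
proof -
  obtain t0 where t0: "t0 \<in> \<T>" using assms by blast
  have e: "equiv I (\<Inter>\<T>)"
  proof (rule equivI')
    show "\<Inter>\<T> \<subseteq> I \<times> I" using t0 assms V_sub by blast
    show "\<And>a. a \<in> I \<Longrightarrow> (a,a) \<in> \<Inter>\<T>" using assms V_equiv equivD(2) by blast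
    show "\<And>a b. (a,b) \<in> \<Inter>\<T> \<Longrightarrow> (b,a) \<in> \<Inter>\<T>" using assms V_equiv equivD(3) by blast
    show "\<And>a b c. (a,b) \<in> \<Inter>\<T> \<Longrightarrow> (b,c) \<in> \<Inter>\<T> \<Longrightarrow> (a,c) \<in> \<Inter>\<T>" using assms V_equiv equivD(4) by blast
  qed
  have "valid (\<Inter>\<T>)"
  proof (rule validI)
    fix a b c d assume "(a,b) \<in> \<Inter>\<T>" "(c,d) \<in> \<Inter>\<T>" "lca2 a b = lca2 c d"
    then show "(a,c) \<in> \<Inter>\<T>" using assms V_valid validD by blast
  qed
  then show ?thesis unfolding V_def using e by blast
qed

lemma lubV: assumes S: "S \<subseteq> V" shows "is_lub V (\<subseteq>) S (\<Inter>{t\<in>V. \<Union>S \<subseteq> t})"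
proof -
  have ne: "{t\<in>V. \<Union>S \<subseteq> t} \<noteq> {}" using top_V S V_sub by blast
  have "\<Inter>{t\<in>V. \<Union>S \<subseteq> t} \<in> V" using Inter_V[OF _ ne] by blast
  then show ?thesis unfolding is_lub_def by blast
qed

lemma lubs_V: "S \<subseteq> V \<Longrightarrow> \<exists>x. is_lub V (\<subseteq>) S x" using lubV by blast

lemma meet_valid: "r \<in> V \<Longrightarrow> s \<in> V \<Longrightarrow> r \<inter> s \<in> V"
  using Inter_V[of "{r,s}"] by simp

lemma glbV: "r \<in> V \<Longrightarrow> s \<in> V \<Longrightarrow> is_glb V (\<subseteq>) {r,s} (r \<inter> s)"
  unfolding is_glb_def using meet_valid by blast

lemma fl_V: "finite_lattice V (\<subseteq>)"
  unfolding finite_lattice_def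
proof (intro conjI ballI impI)
  show "finite V" by (rule finV)
  show "V \<noteq> {}" using Id_V by blast
  fix x y assume "x \<in> V" "y \<in> V"
  then show "(\<exists>z. is_lub V (\<subseteq>) {x, y} z)" "(\<exists>z. is_glb V (\<subseteq>) {x, y} z)"
    using lubs_V[of "{x,y}"] glbV by auto
qed auto

lemma Join_eq: "is_lub V (\<subseteq>) S x \<Longrightarrow> Join V (\<subseteq>) S = x"
  unfolding Join_def by (rule the_equality) (auto simp: is_lub_def)

lemma meet_eq: "r \<in> V \<Longrightarrow> s \<in> V \<Longrightarrow> meet V (\<subseteq>) r s = r \<inter> s"
  unfolding meet_def by (rule the_equality) (auto simp: is_glb_def intro: meet_valid)

lemma join_lub: "x \<in> V \<Longrightarrow> y \<in> V \<Longrightarrow> is_lub V (\<subseteq>) {x,y} (join V (\<subseteq>) x y)"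
  unfolding join_def using Join_eq lubs_V[of "{x,y}"] by fastforce

definition clus :: "'a set set \<Rightarrow> ('a \<times> 'a) set" where
  "clus \<S> = Id_on I \<union> (\<Union>D\<in>\<S>. D \<times> D)"

lemma clus_V: assumes S: "\<S> \<subseteq> T" shows "clus \<S> \<in> V"
proof -
  have e: "equiv I (clus \<S>)"
  proof (rule equivI')
    show "clus \<S> \<subseteq> I \<times> I" unfolding clus_def using S T_sub by blast
    show "\<And>a. a \<in> I \<Longrightarrow> (a,a) \<in> clus \<S>" unfolding clus_def by blast
    show "\<And>a b. (a,b) \<in> clus \<S> \<Longrightarrow> (b,a) \<in> clus \<S>" unfolding clus_def by blast
    fix a b c assume ab: "(a,b) \<in> clus \<S>" and bc: "(b,c) \<in> clus \<S>"
    show "(a,c) \<in> clus \<S>"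
    proof (cases "a = b \<or> b = c")
      case True then show ?thesis using ab bc unfolding clus_def by blast
    next
      case False
      then obtain D D' where D: "D \<in> \<S>" "a \<in> D" "b \<in> D" and D': "D' \<in> \<S>" "b \<in> D'" "c \<in> D'"
        using ab bc unfolding clus_def by blast
      have "D \<subseteq> D' \<or> D' \<subseteq> D" using T_lam[of D D'] S D D' by blast
      then show ?thesis unfolding clus_def using D D' by blast
    qed
  qed
  have "valid (clus \<S>)"
  proof (rule validI)
    fix a b c d assume ab: "(a,b) \<in> clus \<S>" and cd: "(c,d) \<in> clus \<S>" and eq: "lca2 a b = lca2 c d"
    have I4: "a \<in> I" "b \<in> I" "c \<in> I" "d \<in> I" using ab cd equivD(1)[OF e] by blast+
    have c_in: "c \<in> lca2 a b" using lca2_props(2)[OF I4(3,4)] eq by simp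
    show "(a,c) \<in> clus \<S>"
    proof (cases "a = b")
      case True
      then have "c = a" using c_in lca2_same[OF I4(1)] by simp
      then show ?thesis using I4 unfolding clus_def by blast
    next
      case False
      then obtain D where D: "D \<in> \<S>" "a \<in> D" "b \<in> D" using ab unfolding clus_def by blast
      have "lca2 a b \<subseteq> D" using lca2_props(4)[OF I4(1,2)] D S by blast
      then show ?thesis using D c_in unfolding clus_def by blast
    qed
  qed
  then show ?thesis unfolding V_def using e by blast
qed

definition mrg :: "('a \<times> 'a) set \<Rightarrow> 'a set \<Rightarrow> ('a \<times> 'a) set" where
  "mrg r C = r \<union> {(p,q). \<exists>u\<in>C. \<exists>v\<in>C. (p,u) \<in> r \<and> (v,q) \<in> r}"

lemma mrg_case:
  assumes r: "r \<in> V" and C: "C \<in> T" and ab: "(a,b) \<in> r" and cu: "(c,u) \<in> r" and vd: "(v,d) \<in> r"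
    and uv: "u \<in> C" "v \<in> C" and ncd: "(c,d) \<notin> r" and eq: "lca2 a b = lca2 c d"
  shows "(a,c) \<in> mrg r C"
proof -
  have er: "equiv I r" and vr: "valid r" using r V_equiv V_valid by auto
  note E = equivD[OF er]
  have I4: "a \<in> I" "b \<in> I" "c \<in> I" "d \<in> I" "u \<in> I" "v \<in> I" using ab cu vd E(1) by blast+
  define W where "W = lca2 c d"
  note LW = lca2_props(1-3)[OF I4(3,4)]
  have WT: "W \<in> T" and cW: "c \<in> W" and dW: "d \<in> W" using LW W_def by auto
  have aW: "a \<in> W" using lca2_props(2)[OF I4(1,2)] eq W_def by simp
  show ?thesis
  proof (cases "W \<inter> C = {}")
    case True
    have uW: "u \<notin> W" "v \<notin> W" using True uv by auto
    have key: "\<And>p w. p \<in> W \<Longrightarrow> w \<in> C \<Longrightarrow> lca2 p w = lcaT (W \<union> C)"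
    proof -
      fix p w assume p: "p \<in> W" and w: "w \<in> C"
      have pI: "p \<in> I" "w \<in> I" using p w T_sub WT C by blast+
      note L = lca2_props[OF pI]
      show "lca2 p w = lcaT (W \<union> C)"
      proof (rule sym, rule lcaT_eqI[OF L(1)])
        have "lca2 p w \<inter> W \<noteq> {}" using L(2) p by blast
        then have "lca2 p w \<subseteq> W \<or> W \<subseteq> lca2 p w" using T_lam[OF L(1) WT] by blast
        moreover have "\<not> lca2 p w \<subseteq> W" using L(3) w True by blast
        ultimately have 1: "W \<subseteq> lca2 p w" by blast
        have "lca2 p w \<inter> C \<noteq> {}" using L(3) w by blast
        then have "lca2 p w \<subseteq> C \<or> C \<subseteq> lca2 p w" using T_lam[OF L(1) C] by blast
        moreover have "\<not> lca2 p w \<subseteq> C" using L(2) p True by blast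
        ultimately have "C \<subseteq> lca2 p w" by blast
        then show "W \<union> C \<subseteq> lca2 p w" using 1 by blast
        fix E assume "E \<in> T" "W \<union> C \<subseteq> E"
        then show "lca2 p w \<subseteq> E" using L(4) p w by blast
      qed
    qed
    have "lca2 c u = lca2 d v" using key[OF cW uv(1)] key[OF dW uv(2)] by simp
    moreover have "(d,v) \<in> r" using E(3)[OF vd] .
    ultimately have "(c,d) \<in> r" using validD[OF vr cu] by blast
    then show ?thesis using ncd by blast
  next
    case False
    then have WC: "W \<subseteq> C \<or> C \<subseteq> W" using T_lam[OF WT C] by blast
    show ?thesis
    proof (cases "W \<subseteq> C")
      case True
      then have "a \<in> C" using aW by blast
      moreover have "(a,a) \<in> r" using E(2)[OF I4(1)] .
      moreover have "(u,c) \<in> r" using E(3)[OF cu] .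
      ultimately show ?thesis unfolding mrg_def using uv by blast
    next
      case False
      then have CW: "C \<subset> W" using WC by blast
      have cd: "c \<noteq> d" using ncd E(2)[OF I4(3)] by blast
      have innW: "inner_cl W" using two_inner[OF cW dW cd] .
      obtain K K' where KK: "K \<in> T" "K' \<in> T" "K \<inter> K' = {}" "K \<union> K' = W" "K \<noteq> W" "K' \<noteq> W"
        using T_children[OF WT innW] by metis
      have CK: "C \<subseteq> K \<or> C \<subseteq> K'" using child_sub[OF forT KK(1-4) C CW] .
      have nboth: "\<And>X. X \<in> T \<Longrightarrow> X \<subseteq> W \<Longrightarrow> X \<noteq> W \<Longrightarrow> \<not> (c \<in> X \<and> d \<in> X)"
        using lca2_props(4)[OF I4(3,4)] W_def by blast
      have cases: "\<And>X Y. X \<in> T \<Longrightarrow> Y \<in> T \<Longrightarrow> X \<inter> Y = {} \<Longrightarrow> X \<union> Y = W \<Longrightarrow> X \<noteq> W \<Longrightarrow> Y \<noteq> W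
         \<Longrightarrow> C \<subseteq> X \<Longrightarrow> (a,c) \<in> mrg r C"
      proof -
        fix X Y assume XY: "X \<in> T" "Y \<in> T" "X \<inter> Y = {}" "X \<union> Y = W" "X \<noteq> W" "Y \<noteq> W" and CX: "C \<subseteq> X"
        have "c \<in> Y \<or> d \<in> Y" using nboth[OF XY(1) _ XY(5)] XY(4) cW dW by blast
        then show "(a,c) \<in> mrg r C"
        proof
          assume cY: "c \<in> Y"
          have "lca2 u c = W" using lca2_split[OF WT XY(1-4)] uv CX cY by blast
          then have "lca2 c u = lca2 a b" using lca2_comm eq W_def by metis
          then have "(c,a) \<in> r" using validD[OF vr cu ab] by blast
          then show "(a,c) \<in> mrg r C" unfolding mrg_def using E(3) by blast
        next
          assume dY: "d \<in> Y"
          have "lca2 v d = W" using lca2_split[OF WT XY(1-4)] uv CX dY by blast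
          then have "lca2 a b = lca2 v d" using eq W_def by simp
          then have "(a,v) \<in> r" using validD[OF vr ab vd] by blast
          moreover have "(u,c) \<in> r" using E(3)[OF cu] .
          ultimately show "(a,c) \<in> mrg r C" unfolding mrg_def using uv by blast
        qed
      qed
      from CK show ?thesis
      proof
        assume "C \<subseteq> K" then show ?thesis using cases[OF KK] by blast
      next
        assume "C \<subseteq> K'" then show ?thesis using cases[OF KK(2,1) _ _ KK(6,5)] KK(3,4) by blast
      qed
    qed
  qed
qed

end

context ftree begin

lemma mrg_V: assumes r: "r \<in> V" and C: "C \<in> T" shows "mrg r C \<in> V"
proof -
  have er: "equiv I r" and vr: "valid r" using r V_equiv V_valid by auto
  note E = equivD[OF er]
  have CI: "C \<subseteq> I" using T_sub[OF C] .
  have e: "equiv I (mrg r C)"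
  proof (rule equivI')
    show "mrg r C \<subseteq> I \<times> I" unfolding mrg_def using E(1) by blast
    show "\<And>a. a \<in> I \<Longrightarrow> (a,a) \<in> mrg r C" unfolding mrg_def using E(2) by blast
    show "\<And>a b. (a,b) \<in> mrg r C \<Longrightarrow> (b,a) \<in> mrg r C" unfolding mrg_def using E(3) by blast
    fix a b c assume ab: "(a,b) \<in> mrg r C" and bc: "(b,c) \<in> mrg r C"
    show "(a,c) \<in> mrg r C"
    proof (cases "(a,b) \<in> r")
      case True
      show ?thesis
      proof (cases "(b,c) \<in> r")
        case True then show ?thesis using \<open>(a,b) \<in> r\<close> E(4) unfolding mrg_def by blast
      next
        case False
        then obtain u v where "u \<in> C" "v \<in> C" "(b,u) \<in> r" "(v,c) \<in> r" using bc unfolding mrg_def by blast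
        then show ?thesis using \<open>(a,b) \<in> r\<close> E(4) unfolding mrg_def by blast
      qed
    next
      case False
      then obtain u v where uv: "u \<in> C" "v \<in> C" "(a,u) \<in> r" "(v,b) \<in> r" using ab unfolding mrg_def by blast
      show ?thesis
      proof (cases "(b,c) \<in> r")
        case True then show ?thesis using uv E(4) unfolding mrg_def by blast
      next
        case False
        then obtain u' v' where "u' \<in> C" "v' \<in> C" "(b,u') \<in> r" "(v',c) \<in> r" using bc unfolding mrg_def by blast
        then show ?thesis using uv E(4) unfolding mrg_def by blast
      qed
    qed
  qed
  have "valid (mrg r C)"
  proof (rule validI)
    fix a b c d assume ab: "(a,b) \<in> mrg r C" and cd: "(c,d) \<in> mrg r C" and eq: "lca2 a b = lca2 c d"
    show "(a,c) \<in> mrg r C"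
    proof (cases "(a,b) \<in> r")
      case abr: True
      show ?thesis
      proof (cases "(c,d) \<in> r")
        case True then show ?thesis using validD[OF vr abr _ eq] unfolding mrg_def by blast
      next
        case False
        then obtain u v where "u \<in> C" "v \<in> C" "(c,u) \<in> r" "(v,d) \<in> r" using cd unfolding mrg_def by blast
        then show ?thesis using mrg_case[OF r C abr _ _ _ _ False eq] by blast
      qed
    next
      case abr: False
      then obtain u v where uv: "u \<in> C" "v \<in> C" "(a,u) \<in> r" "(v,b) \<in> r" using ab unfolding mrg_def by blast
      show ?thesis
      proof (cases "(c,d) \<in> r")
        case cdr: True
        have "(c,a) \<in> mrg r C" using mrg_case[OF r C cdr uv(3) uv(4) uv(1,2) abr] eq by simp
        then show ?thesis using e equivD(3) by blast
      next
        case False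
        then obtain u' v' where "u' \<in> C" "v' \<in> C" "(c,u') \<in> r" "(v',d) \<in> r" using cd unfolding mrg_def by blast
        then show ?thesis using uv E(3) unfolding mrg_def by blast
      qed
    qed
  qed
  then show ?thesis unfolding V_def using e by blast
qed

lemma mrg_trancl: assumes r: "r \<in> V" and C: "C \<in> T" shows "(r \<union> C \<times> C)\<^sup>+ = mrg r C"
proof
  have er: "equiv I r" using r V_equiv by auto
  note E = equivD[OF er]
  have CI: "C \<subseteq> I" using T_sub[OF C] .
  have "r \<union> C \<times> C \<subseteq> mrg r C" unfolding mrg_def using E(2) CI by blast
  moreover have "trans (mrg r C)" using V_equiv[OF mrg_V[OF r C]] unfolding equiv_def by blast
  ultimately show "(r \<union> C \<times> C)\<^sup>+ \<subseteq> mrg r C" by (rule trancl_least)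
  show "mrg r C \<subseteq> (r \<union> C \<times> C)\<^sup>+"
  proof
    fix p assume pm: "p \<in> mrg r C"
    obtain a b where p: "p = (a,b)" by (cases p)
    have h: "(a,b) \<in> r \<or> (\<exists>u\<in>C. \<exists>v\<in>C. (a,u) \<in> r \<and> (v,b) \<in> r)"
      using pm p unfolding mrg_def by blast
    from h show "p \<in> (r \<union> C \<times> C)\<^sup>+"
    proof
      assume "(a,b) \<in> r" then show ?thesis using p by blast
    next
      assume "\<exists>u\<in>C. \<exists>v\<in>C. (a,u) \<in> r \<and> (v,b) \<in> r"
      then obtain u v where uv: "u \<in> C" "v \<in> C" "(a,u) \<in> r" "(v,b) \<in> r" by blast
      have "(a,u) \<in> (r \<union> C \<times> C)\<^sup>+" "(u,v) \<in> (r \<union> C \<times> C)\<^sup>+" "(v,b) \<in> (r \<union> C \<times> C)\<^sup>+" using uv by blast+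
      then show ?thesis using p trancl_trans by metis
    qed
  qed
qed

lemma union_join_V:
  assumes y: "y \<in> V" and fin: "finite \<S>" and S: "\<S> \<subseteq> T"
  shows "(y \<union> (\<Union>D\<in>\<S>. D \<times> D))\<^sup>+ \<in> V"
  using fin S
proof (induct \<S> rule: finite_induct)
  case empty
  have "trans y" using V_equiv[OF y] unfolding equiv_def by blast
  then show ?case using y by simp
next
  case (insert C \<S>)
  have IH: "(y \<union> (\<Union>D\<in>\<S>. D \<times> D))\<^sup>+ \<in> V" using insert by blast
  have CT: "C \<in> T" using insert by blast
  have "y \<union> (\<Union>D\<in>insert C \<S>. D \<times> D) = (y \<union> (\<Union>D\<in>\<S>. D \<times> D)) \<union> C \<times> C" by blast
  then have "(y \<union> (\<Union>D\<in>insert C \<S>. D \<times> D))\<^sup>+ = ((y \<union> (\<Union>D\<in>\<S>. D \<times> D))\<^sup>+ \<union> C \<times> C)\<^sup>+"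
    using trancl_absorb by metis
  also have "... = mrg ((y \<union> (\<Union>D\<in>\<S>. D \<times> D))\<^sup>+) C" using mrg_trancl[OF IH CT] .
  finally show ?case using mrg_V[OF IH CT] by simp
qed

lemma join_clus_V:
  assumes y: "y \<in> V" and fin: "finite \<S>" and S: "\<S> \<subseteq> T"
  shows "(y \<union> clus \<S>)\<^sup>+ \<in> V"
proof -
  have "y \<union> clus \<S> = y \<union> (\<Union>D\<in>\<S>. D \<times> D)" unfolding clus_def using V_Id[OF y] by blast
  then show ?thesis using union_join_V[OF assms] by simp
qed

end

context ftree begin

lemma walk_lemma:
  assumes tau: "equiv I \<tau>" and z: "z \<in> V" and tz: "\<tau> \<subseteq> z" and S: "\<S> \<subseteq> T" and xz: "clus \<S> \<inter> z \<subseteq> \<tau>"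
  shows "\<forall>f. (\<forall>l<n. (f l, f (Suc l)) \<in> \<tau> \<union> clus \<S>) \<longrightarrow> (f 0, f n) \<in> z \<longrightarrow> (f 0, f n) \<in> \<tau>"
proof (induct n rule: less_induct)
  case (less n)
  let ?x = "clus \<S>"
  have IH: "\<And>m g. m < n \<Longrightarrow> (\<forall>l<m. (g l, g (Suc l)) \<in> \<tau> \<union> ?x) \<Longrightarrow> (g 0, g m) \<in> z \<Longrightarrow> (g 0, g m) \<in> \<tau>"
    using less by blast
  note Et = equivD[OF tau]
  note Ez = equivD[OF V_equiv[OF z]]
  have vz: "valid z" using V_valid[OF z] .
  have xsub: "?x \<subseteq> I \<times> I" using V_sub[OF clus_V[OF S]] .
  show ?case
  proof (intro allI impI)
    fix f assume steps: "\<forall>l<n. (f l, f (Suc l)) \<in> \<tau> \<union> ?x" and ij: "(f 0, f n) \<in> z"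
    have stepI: "\<And>l. l < n \<Longrightarrow> f l \<in> I" using steps Et(1) xsub by blast
    have ptsI: "\<And>l. l \<le> n \<Longrightarrow> f l \<in> I"
    proof -
      fix l assume "l \<le> n"
      then have "l < n \<or> l = n" by auto
      then show "f l \<in> I" using stepI ij Ez(1) by blast
    qed
    show "(f 0, f n) \<in> \<tau>"
    proof (cases "(f 0, f n) \<in> ?x")
      case True then show ?thesis using xz ij by blast
    next
      case notx: False
      show ?thesis
      proof (cases "f 0 = f n")
        case True then show ?thesis using Et(2) ptsI[of 0] by simp
      next
        case neq: False
        define pts where "pts = f ` {..n}"
        have pI: "pts \<subseteq> I" using ptsI unfolding pts_def by blast
        have pne: "pts \<noteq> {}" unfolding pts_def by blast
        define D where "D = lcaT pts"
        note LD = lcaT_props[OF pne pI, folded D_def]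
        have inD: "\<And>l. l \<le> n \<Longrightarrow> f l \<in> D" using LD(2) unfolding pts_def by blast
        have innD: "inner_cl D" using two_inner[OF inD[of 0] inD[of n] neq] by simp
        obtain Dl Dr where DD: "Dl \<in> T" "Dr \<in> T" "Dl \<inter> Dr = {}" "Dl \<union> Dr = D" "Dl \<noteq> D" "Dr \<noteq> D"
          using T_children[OF LD(1) innD] by metis
        have notall: "\<And>X. X \<in> T \<Longrightarrow> X \<noteq> D \<Longrightarrow> X \<subseteq> D \<Longrightarrow> \<exists>m\<le>n. f m \<notin> X"
        proof (rule ccontr)
          fix X assume X: "X \<in> T" "X \<noteq> D" "X \<subseteq> D" and h: "\<not> (\<exists>m\<le>n. f m \<notin> X)"
          then have "pts \<subseteq> X" unfolding pts_def by auto
          then have "D \<subseteq> X" using LD(3)[OF X(1)] by blast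
          then show False using X by blast
        qed
        have lcaD: "\<And>p q. p \<in> D \<Longrightarrow> q \<in> D \<Longrightarrow> (p \<in> Dl) \<noteq> (q \<in> Dl) \<Longrightarrow> lca2 p q = D"
        proof -
          fix p q assume p: "p \<in> D" and q: "q \<in> D" and s: "(p \<in> Dl) \<noteq> (q \<in> Dl)"
          show "lca2 p q = D"
          proof (cases "p \<in> Dl")
            case True
            then have "q \<in> Dr" using s q DD(4) by blast
            then show ?thesis using lca2_split[OF LD(1) DD(1-4) True] by blast
          next
            case False
            then have "p \<in> Dr" "q \<in> Dl" using s p DD(4) by blast+
            then show ?thesis using lca2_split[OF LD(1) DD(1-4)] lca2_comm by metis
          qed
        qed
        define side where "side = (\<lambda>l. f l \<in> Dl)"
        have cross: "\<And>l. l < n \<Longrightarrow> side l \<noteq> side (Suc l) \<Longrightarrow> (f l, f (Suc l)) \<in> \<tau> \<and> lca2 (f l) (f (Suc l)) = D"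
        proof -
          fix l assume l: "l < n" and sc: "side l \<noteq> side (Suc l)"
          have fl1: "f l \<in> D" by (rule inD) (use l in simp)
          have fl2: "f (Suc l) \<in> D" by (rule inD) (use l in simp)
          note fl = fl1 fl2
          have nx: "(f l, f (Suc l)) \<notin> ?x"
          proof
            assume "(f l, f (Suc l)) \<in> ?x"
            then have "f l = f (Suc l) \<or> (\<exists>S0\<in>\<S>. f l \<in> S0 \<and> f (Suc l) \<in> S0)" unfolding clus_def by auto
            then show False
            proof
              assume "f l = f (Suc l)" then show False using sc unfolding side_def by simp
            next
              assume "\<exists>S0\<in>\<S>. f l \<in> S0 \<and> f (Suc l) \<in> S0"
              then obtain S0 where S0: "S0 \<in> \<S>" "f l \<in> S0" "f (Suc l) \<in> S0" by blast
              have S0T: "S0 \<in> T" using S S0 by blast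
              have "S0 \<inter> D \<noteq> {}" using S0(2) fl by blast
              then have "S0 \<subseteq> D \<or> D \<subseteq> S0" using T_lam[OF S0T LD(1)] by blast
              moreover have "\<not> D \<subseteq> S0"
              proof
                assume "D \<subseteq> S0"
                then have "(f 0, f n) \<in> ?x" using inD[of 0] inD[of n] S0(1) unfolding clus_def by blast
                then show False using notx by blast
              qed
              ultimately have "S0 \<subset> D" by blast
              then have "S0 \<subseteq> Dl \<or> S0 \<subseteq> Dr" using child_sub[OF forT DD(1-4) S0T] by blast
              then show False
              proof
                assume "S0 \<subseteq> Dl"
                then have "f l \<in> Dl" "f (Suc l) \<in> Dl" using S0 by auto
                then show False using sc unfolding side_def by simp
              next
                assume "S0 \<subseteq> Dr"
                then have "f l \<notin> Dl" "f (Suc l) \<notin> Dl" using S0 DD(3) by auto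
                then show False using sc unfolding side_def by simp
              qed
            qed
          qed
          have "(f l, f (Suc l)) \<in> \<tau>" using steps l nx by blast
          moreover have "lca2 (f l) (f (Suc l)) = D" using lcaD[OF fl] sc unfolding side_def by blast
          ultimately show "(f l, f (Suc l)) \<in> \<tau> \<and> lca2 (f l) (f (Suc l)) = D" by blast
        qed
        show ?thesis
        proof (cases "side 0 = side n")
          case False
          obtain l where l: "l < n" "side l \<noteq> side (Suc l)" using cross_step[of side 0 n] False by auto
          note cl = cross[OF l]
          have lij: "lca2 (f 0) (f n) = D" using lcaD[OF inD[of 0] inD[of n]] False unfolding side_def by auto
          have z1: "(f 0, f l) \<in> z" using validD[OF vz ij, of "f l" "f (Suc l)"] tz cl lij by auto
          have a1: "(f 0, f l) \<in> \<tau>" using IH[of l f] l steps z1 by auto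
          define g where "g = (\<lambda>t. f (t + Suc l))"
          have gs: "\<forall>t<n - Suc l. (g t, g (Suc t)) \<in> \<tau> \<union> ?x"
          proof (intro allI impI)
            fix t assume "t < n - Suc l"
            then have "t + Suc l < n" by simp
            then show "(g t, g (Suc t)) \<in> \<tau> \<union> ?x" using steps unfolding g_def by simp
          qed
          have g0: "g 0 = f (Suc l)" and gm: "g (n - Suc l) = f n" unfolding g_def using l by auto
          have "(f (Suc l), f n) \<in> z" using Ez(3,4) tz cl z1 ij by blast
          then have a2: "(f (Suc l), f n) \<in> \<tau>" using IH[of "n - Suc l" g] gs g0 gm l by auto
          show ?thesis using Et(4)[OF Et(4)[OF a1 conjunct1[OF cl]] a2] .
        next
          case True
          obtain m where m: "m \<le> n" "side m \<noteq> side 0"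
          proof (cases "side 0")
            case True
            obtain m where "m \<le> n" "f m \<notin> Dl" using notall[OF DD(1) DD(5)] DD(4) by blast
            then show ?thesis using that True unfolding side_def by blast
          next
            case False
            obtain m where m: "m \<le> n" "f m \<notin> Dr" using notall[OF DD(2) DD(6)] DD(4) by blast
            then have "f m \<in> Dl" using inD DD(4) by blast
            then show ?thesis using that m False unfolding side_def by blast
          qed
          obtain l1 where l1: "l1 < m" "side l1 \<noteq> side (Suc l1)" using cross_step[of side 0 m] m by auto
          obtain l2 where l2: "m \<le> l2" "l2 < n" "side l2 \<noteq> side (Suc l2)" using cross_step[of side m n] m True by auto
          have l12: "l1 < l2" using l1 l2 by simp
          note c1 = cross[OF _ l1(2)] and c2 = cross[OF l2(2,3)]
          have c1': "(f l1, f (Suc l1)) \<in> \<tau>" "lca2 (f l1) (f (Suc l1)) = D" using c1 l12 l2 by auto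
          have z12: "(f l1, f l2) \<in> z" using validD[OF vz, of "f l1" "f (Suc l1)" "f l2" "f (Suc l2)"] tz c1' c2 by auto
          have zm: "(f (Suc l1), f l2) \<in> z" using Ez(3,4) tz c1' z12 by blast
          define g where "g = (\<lambda>t. f (t + Suc l1))"
          have gs: "\<forall>t<l2 - Suc l1. (g t, g (Suc t)) \<in> \<tau> \<union> ?x"
          proof (intro allI impI)
            fix t assume "t < l2 - Suc l1"
            then have "t + Suc l1 < n" using l2 by simp
            then show "(g t, g (Suc t)) \<in> \<tau> \<union> ?x" using steps unfolding g_def by simp
          qed
          have g0: "g 0 = f (Suc l1)" and gm: "g (l2 - Suc l1) = f l2" unfolding g_def using l12 by auto
          have mid: "(f (Suc l1), f l2) \<in> \<tau>" using IH[of "l2 - Suc l1" g] gs g0 gm zm l2 by auto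
          have jump: "(f l1, f (Suc l2)) \<in> \<tau>" using Et(4)[OF Et(4)[OF c1'(1) mid] conjunct1[OF c2]] .
          define d where "d = l2 - l1"
          define n' where "n' = n - d"
          define h where "h = (\<lambda>t. if t \<le> l1 then f t else f (t + d))"
          have n'n: "n' < n" unfolding n'_def d_def using l12 l2 by simp
          have h0: "h 0 = f 0" unfolding h_def by simp
          have hn: "h n' = f n" unfolding h_def n'_def d_def using l12 l2 by simp
          have hs: "\<forall>t<n'. (h t, h (Suc t)) \<in> \<tau> \<union> ?x"
          proof (intro allI impI)
            fix t assume t: "t < n'"
            consider (a) "t < l1" | (b) "t = l1" | (c) "l1 < t" by linarith
            then show "(h t, h (Suc t)) \<in> \<tau> \<union> ?x"
            proof cases
              case a
              then have "h t = f t" "h (Suc t) = f (Suc t)" unfolding h_def by auto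
              then show ?thesis using steps a l12 l2 by simp
            next
              case b
              then have "h t = f l1" "h (Suc t) = f (Suc l2)" unfolding h_def d_def using l12 by auto
              then show ?thesis using jump by simp
            next
              case c
              then have "h t = f (t + d)" "h (Suc t) = f (Suc (t + d))" unfolding h_def by auto
              moreover have "t + d < n" using t unfolding n'_def d_def using l12 l2 by simp
              ultimately show ?thesis using steps by simp
            qed
          qed
          show ?thesis using IH[OF n'n hs] h0 hn ij by simp
        qed
      qed
    qed
  qed
qed

lemma walk_closure:
  assumes tau: "equiv I \<tau>" and z: "z \<in> V" and tz: "\<tau> \<subseteq> z" and S: "\<S> \<subseteq> T" and xz: "clus \<S> \<inter> z \<subseteq> \<tau>"
  shows "(\<tau> \<union> clus \<S>)\<^sup>+ \<inter> z \<subseteq> \<tau>"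
proof
  fix p assume p: "p \<in> (\<tau> \<union> clus \<S>)\<^sup>+ \<inter> z"
  obtain a b where ab: "p = (a,b)" by (cases p)
  obtain n where "(a,b) \<in> (\<tau> \<union> clus \<S>) ^^ n" using p ab trancl_power by blast
  then obtain f where f: "f 0 = a" "f n = b" "\<forall>i<n. (f i, f (Suc i)) \<in> \<tau> \<union> clus \<S>"
    using relpow_fun_conv by metis
  have "(f 0, f n) \<in> \<tau>" using walk_lemma[OF assms, of n] f p ab by auto
  then show "p \<in> \<tau>" using f ab by simp
qed

end

context ftree begin

lemma join_clus_eq:
  assumes y: "y \<in> V" and fin: "finite \<S>" and S: "\<S> \<subseteq> T"
  shows "join V (\<subseteq>) y (clus \<S>) = (y \<union> clus \<S>)\<^sup>+"
proof -
  have inV: "(y \<union> clus \<S>)\<^sup>+ \<in> V" using join_clus_V[OF assms] .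
  have "is_lub V (\<subseteq>) {y, clus \<S>} ((y \<union> clus \<S>)\<^sup>+)"
    unfolding is_lub_def
  proof (intro conjI ballI impI)
    show "(y \<union> clus \<S>)\<^sup>+ \<in> V" by (rule inV)
    fix s assume "s \<in> {y, clus \<S>}" then show "s \<subseteq> (y \<union> clus \<S>)\<^sup>+" by auto
  next
    fix t assume t: "t \<in> V" "\<forall>s\<in>{y, clus \<S>}. s \<subseteq> t"
    then have "y \<union> clus \<S> \<subseteq> t" by blast
    moreover have "trans t" using V_equiv[OF t(1)] unfolding equiv_def by blast
    ultimately show "(y \<union> clus \<S>)\<^sup>+ \<subseteq> t" by (rule trancl_least)
  qed
  then show ?thesis unfolding join_def by (rule Join_eq)
qed

lemma lm_clus:
  assumes fin: "finite \<S>" and S: "\<S> \<subseteq> T"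
  shows "left_modular V (\<subseteq>) (clus \<S>)"
  unfolding left_modular_def
proof (intro ballI impI)
  fix y z assume y: "y \<in> V" and z: "z \<in> V" and yz: "y \<subseteq> z"
  let ?x = "clus \<S>"
  have xV: "?x \<in> V" using clus_V[OF S] .
  have m1: "meet V (\<subseteq>) ?x z = ?x \<inter> z" using meet_eq[OF xV z] .
  have xzV: "?x \<inter> z \<in> V" using meet_valid[OF xV z] .
  define J where "J = join V (\<subseteq>) y (?x \<inter> z)"
  have LJ: "is_lub V (\<subseteq>) {y, ?x \<inter> z} J" unfolding J_def using join_lub[OF y xzV] .
  have JV: "J \<in> V" and yJ: "y \<subseteq> J" and xzJ: "?x \<inter> z \<subseteq> J" using LJ unfolding is_lub_def by auto
  have Jz: "J \<subseteq> z" using LJ z yz unfolding is_lub_def by blast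
  have j1: "join V (\<subseteq>) y ?x = (y \<union> ?x)\<^sup>+" using join_clus_eq[OF y fin S] .
  have jV: "(y \<union> ?x)\<^sup>+ \<in> V" using join_clus_V[OF y fin S] .
  have Jsub: "J \<subseteq> (y \<union> ?x)\<^sup>+"
  proof -
    have "y \<subseteq> (y \<union> ?x)\<^sup>+" "?x \<inter> z \<subseteq> (y \<union> ?x)\<^sup>+" by auto
    then show ?thesis using LJ jV unfolding is_lub_def by blast
  qed
  have m2: "meet V (\<subseteq>) ((y \<union> ?x)\<^sup>+) z = (y \<union> ?x)\<^sup>+ \<inter> z" using meet_eq[OF jV z] .
  have "(y \<union> ?x)\<^sup>+ \<subseteq> (J \<union> ?x)\<^sup>+" using yJ by (intro trancl_mono_subset) blast
  moreover have "(J \<union> ?x)\<^sup>+ \<inter> z \<subseteq> J" using walk_closure[OF V_equiv[OF JV] z Jz S xzJ] .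
  ultimately have "(y \<union> ?x)\<^sup>+ \<inter> z \<subseteq> J" by blast
  then have "J = (y \<union> ?x)\<^sup>+ \<inter> z" using Jsub Jz by blast
  then show "join V (\<subseteq>) y (meet V (\<subseteq>) ?x z) = meet V (\<subseteq>) (join V (\<subseteq>) y ?x) z"
    using m1 m2 j1 J_def by simp
qed

definition innerT where "innerT = {D\<in>T. inner_cl D}"

definition ds :: "'a set list" where
  "ds = sort_key card (SOME xs. set xs = innerT \<and> distinct xs)"

lemma ds_props: "set ds = innerT" "distinct ds" "sorted (map card ds)"
proof -
  have fin: "finite innerT" unfolding innerT_def using forest_finite[OF finI forT] by simp
  obtain xs where "set xs = innerT \<and> distinct xs" using finite_distinct_list[OF fin] by blast
  then have h: "set (SOME xs. set xs = innerT \<and> distinct xs) = innerT \<and> distinct (SOME xs. set xs = innerT \<and> distinct xs)"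
    by (rule someI)
  show "set ds = innerT" unfolding ds_def using h by simp
  show "distinct ds" unfolding ds_def using h by simp
  show "sorted (map card ds)" unfolding ds_def by simp
qed

definition ch :: "nat \<Rightarrow> ('a \<times> 'a) set" where "ch i = clus (set (take i ds))"

lemma ch_S: "set (take i ds) \<subseteq> T" using ds_props(1) set_take_subset[of i ds] unfolding innerT_def by blast

lemma ch_V: "ch i \<in> V" unfolding ch_def using clus_V[OF ch_S] .

lemma ch_lm: "left_modular V (\<subseteq>) (ch i)" unfolding ch_def using lm_clus[OF _ ch_S] by simp

lemma T_fin: "D \<in> T \<Longrightarrow> finite D" using T_sub finI finite_subset by blast

lemma ds_card_mono: "j \<le> i \<Longrightarrow> i < length ds \<Longrightarrow> card (ds!j) \<le> card (ds!i)"
  using sorted_nth_mono[OF ds_props(3), of j i] by simp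

lemma ch_cover:
  assumes i: "i < length ds"
  shows "covers V (\<subseteq>) (ch i) (ch (Suc i))"
proof -
  define D where "D = ds!i"
  have Din: "D \<in> innerT" using ds_props(1) i nth_mem unfolding D_def by blast
  have DT: "D \<in> T" and innD: "inner_cl D" using Din unfolding innerT_def by auto
  have tk: "set (take (Suc i) ds) = insert D (set (take i ds))"
    using i unfolding D_def by (simp add: take_Suc_conv_app_nth)
  have chS: "ch (Suc i) = ch i \<union> D \<times> D" unfolding ch_def clus_def tk by blast
  have F1: "\<And>X. X \<in> T \<Longrightarrow> inner_cl X \<Longrightarrow> X \<subset> D \<Longrightarrow> X \<in> set (take i ds)"
  proof -
    fix X assume X: "X \<in> T" "inner_cl X" "X \<subset> D"
    then have "X \<in> set ds" using ds_props(1) unfolding innerT_def by blast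
    then obtain j where j: "j < length ds" "ds!j = X" by (metis in_set_conv_nth)
    have "card X < card D" using X(3) T_fin[OF DT] psubset_card_mono by blast
    then have "\<not> i \<le> j" using ds_card_mono[of i j] j unfolding D_def by auto
    then show "X \<in> set (take i ds)" using j by (metis in_set_conv_nth length_take min_less_iff_conj nth_take not_le)
  qed
  have F2: "\<And>E. E \<in> set (take i ds) \<Longrightarrow> \<not> D \<subseteq> E"
  proof
    fix E assume E: "E \<in> set (take i ds)" and DE: "D \<subseteq> E"
    obtain j where j: "j < length (take i ds)" "take i ds ! j = E" using E by (metis in_set_conv_nth)
    have ji: "j < i" "j < length ds" using j by auto
    have Ej: "E = ds!j" using j by simp
    have "E \<in> T" using ch_S E by blast
    then have "card D \<le> card E" using DE T_fin card_mono by blast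
    moreover have "card E \<le> card D" using ds_card_mono[of j i] ji i Ej unfolding D_def by simp
    ultimately have "card D = card E" by simp
    then have "D = E" using DE T_fin[OF \<open>E \<in> T\<close>] card_subset_eq by blast
    then have "ds!j = ds!i" using Ej D_def by simp
    then show False using nth_eq_iff_index_eq[OF ds_props(2) ji(2) i] ji by simp
  qed
  obtain Dl Dr where DD: "Dl \<in> T" "Dr \<in> T" "Dl \<inter> Dr = {}" "Dl \<union> Dr = D" "Dl \<noteq> D" "Dr \<noteq> D"
    using T_children[OF DT innD] by metis
  have sq: "\<And>X. X \<in> T \<Longrightarrow> X \<subset> D \<Longrightarrow> X \<times> X \<subseteq> ch i"
  proof -
    fix X assume X: "X \<in> T" "X \<subset> D"
    show "X \<times> X \<subseteq> ch i"
    proof (cases "inner_cl X")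
      case True then show ?thesis using F1[OF X(1) True X(2)] unfolding ch_def clus_def by blast
    next
      case False
      then obtain a where "X = {a}" using not_inner by blast
      then show ?thesis using T_sub[OF X(1)] unfolding ch_def clus_def by auto
    qed
  qed
  have sqL: "Dl \<times> Dl \<subseteq> ch i" using sq[OF DD(1)] DD(4,5) by blast
  have sqR: "Dr \<times> Dr \<subseteq> ch i" using sq[OF DD(2)] DD(4,6) by blast
  have nLR: "\<And>p q. p \<in> Dl \<Longrightarrow> q \<in> Dr \<Longrightarrow> (p,q) \<notin> ch i"
  proof
    fix p q assume p: "p \<in> Dl" and q: "q \<in> Dr" and pq: "(p,q) \<in> ch i"
    have pqI: "p \<in> I" "q \<in> I" using p q DD(1,2) T_sub by blast+
    have "p \<noteq> q" using p q DD(3) by blast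
    then obtain E where E: "E \<in> set (take i ds)" "p \<in> E" "q \<in> E" using pq unfolding ch_def clus_def by blast
    have "E \<in> T" using ch_S E(1) by blast
    then have "lca2 p q \<subseteq> E" using lca2_props(4)[OF pqI] E by blast
    moreover have "lca2 p q = D" using lca2_split[OF DT DD(1-4) p q] .
    ultimately show False using F2[OF E(1)] by blast
  qed
  obtain p q where pq: "p \<in> Dl" "q \<in> Dr" using DD(1,2) T_ne by blast
  show ?thesis
    unfolding covers_def
  proof (intro conjI)
    show "ch i \<in> V" "ch (Suc i) \<in> V" using ch_V by auto
    show "ch i \<subseteq> ch (Suc i)" using chS by blast
    show "ch i \<noteq> ch (Suc i)" using chS nLR[OF pq] pq DD(4) by blast
    show "\<not> (\<exists>z\<in>V. ch i \<subseteq> z \<and> z \<subseteq> ch (Suc i) \<and> z \<noteq> ch i \<and> z \<noteq> ch (Suc i))"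
    proof
      assume "\<exists>z\<in>V. ch i \<subseteq> z \<and> z \<subseteq> ch (Suc i) \<and> z \<noteq> ch i \<and> z \<noteq> ch (Suc i)"
      then obtain z where z: "z \<in> V" "ch i \<subseteq> z" "z \<subseteq> ch (Suc i)" "z \<noteq> ch i" "z \<noteq> ch (Suc i)" by blast
      note Ez = equivD[OF V_equiv[OF z(1)]]
      have "\<not> z \<subseteq> ch i" using z(2,4) by blast
      then obtain a b where ab: "(a,b) \<in> z" "(a,b) \<notin> ch i" by auto
      have abD: "a \<in> D" "b \<in> D" using ab z(3) chS by blast+
      have cross: "(a \<in> Dl \<and> b \<in> Dr) \<or> (a \<in> Dr \<and> b \<in> Dl)" using abD DD(4) sqL sqR ab(2) by blast
      have "D \<times> D \<subseteq> z"
      proof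
        fix w assume "w \<in> D \<times> D"
        then obtain u v where w: "w = (u,v)" "u \<in> D" "v \<in> D" by blast
        have link: "\<And>s. s \<in> D \<Longrightarrow> (s,a) \<in> z \<or> (s,b) \<in> z" using cross sqL sqR z(2) DD(4) by blast
        have abz: "(a,b) \<in> z" "(b,a) \<in> z" using ab(1) Ez(3) by auto
        have "(u,a) \<in> z" using link[OF w(2)] abz Ez(4) by blast
        moreover have "(v,a) \<in> z" using link[OF w(3)] abz Ez(4) by blast
        ultimately show "w \<in> z" using w Ez(3,4) by blast
      qed
      then have "ch (Suc i) \<subseteq> z" using chS z(2) by blast
      then show False using z(3,5) by blast
    qed
  qed
qed

lemma ch_top: "ch (length ds) = I \<times> I"
proof
  show "ch (length ds) \<subseteq> I \<times> I" using V_sub[OF ch_V] .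
  show "I \<times> I \<subseteq> ch (length ds)"
  proof (cases "inner_cl I")
    case True
    then have "I \<in> set ds" using ds_props(1) IT unfolding innerT_def by blast
    then show ?thesis unfolding ch_def clus_def by auto
  next
    case False
    then obtain a where "I = {a}" using not_inner by blast
    then show ?thesis unfolding ch_def clus_def by auto
  qed
qed

lemma ch_0: "ch 0 = Id_on I" unfolding ch_def clus_def by simp

lemma ch_max: "maximal_chain V (\<subseteq>) ch (length ds)"
  unfolding maximal_chain_def
proof (intro conjI allI impI ballI)
  show "\<And>i. ch i \<in> V" using ch_V .
  fix x assume "x \<in> V" then show "ch 0 \<subseteq> x" using ch_0 V_Id by simp
next
  fix x assume "x \<in> V" then show "x \<subseteq> ch (length ds)" using ch_top V_sub by simp
next
  fix i assume "i < length ds" then show "covers V (\<subseteq>) (ch i) (ch (Suc i))" using ch_cover by blast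
qed

end

lemma strict_chain: "(\<forall>i<k. L i < L (Suc i)) \<Longrightarrow> i < j \<Longrightarrow> j \<le> k \<Longrightarrow> (L i :: nat) < L j"
proof (induct j)
  case 0 then show ?case by simp
next
  case (Suc j)
  show ?case
  proof (cases "i = j")
    case True then show ?thesis using Suc by simp
  next
    case False
    then have "L i < L j" using Suc by simp
    moreover have "L j < L (Suc j)" using Suc by simp
    ultimately show ?thesis by simp
  qed
qed

context ftree begin

definition pr :: "'a \<Rightarrow> 'a \<Rightarrow> ('a \<times> 'a) set" where "pr a b = Id_on I \<union> {(a,b),(b,a)}"

lemma pr_V: assumes ab: "a \<in> I" "b \<in> I" "a \<noteq> b" shows "pr a b \<in> V"
proof -
  have e: "equiv I (pr a b)"
    by (rule equivI') (use ab in \<open>auto simp: pr_def\<close>)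
  have "valid (pr a b)"
  proof (rule validI)
    fix p q c d assume pq: "(p,q) \<in> pr a b" and cd: "(c,d) \<in> pr a b" and eq: "lca2 p q = lca2 c d"
    have I4: "p \<in> I" "q \<in> I" "c \<in> I" "d \<in> I" using pq cd equivD(1)[OF e] by blast+
    have sab: "lca2 a b \<noteq> {x}" for x using lca2_props(2,3)[OF ab(1,2)] ab(3) by auto
    show "(p,c) \<in> pr a b"
    proof (cases "p = q")
      case True
      then have "lca2 c d = {p}" using eq lca2_same[OF I4(1)] by simp
      then have "c = p" using lca2_props(2)[OF I4(3,4)] by blast
      then show ?thesis using I4 unfolding pr_def by blast
    next
      case False
      then have pq2: "(p = a \<and> q = b) \<or> (p = b \<and> q = a)" using pq unfolding pr_def by blast
      show ?thesis
      proof (cases "c = d")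
        case True
        then have "lca2 p q = {c}" using eq lca2_same[OF I4(3)] by simp
        then show ?thesis using pq2 sab lca2_comm by metis
      next
        case False
        then have "(c = a \<and> d = b) \<or> (c = b \<and> d = a)" using cd unfolding pr_def by blast
        then show ?thesis using pq2 ab unfolding pr_def by blast
      qed
    qed
  qed
  then show ?thesis unfolding V_def using e by blast
qed

lemma atoms_pr:
  assumes x: "x \<in> atoms V (\<subseteq>)"
  shows "\<exists>a b. a \<in> I \<and> b \<in> I \<and> a \<noteq> b \<and> x = pr a b"
proof -
  obtain b0 where b0: "b0 \<in> V" "\<forall>y\<in>V. b0 \<subseteq> y" "covers V (\<subseteq>) b0 x" and xV: "x \<in> V"
    using x unfolding atoms_def by blast
  have "b0 = Id_on I" using b0(2) Id_V V_Id[OF b0(1)] by blast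
  then have cv: "Id_on I \<subseteq> x" "Id_on I \<noteq> x" "\<not> (\<exists>z\<in>V. Id_on I \<subseteq> z \<and> z \<subseteq> x \<and> z \<noteq> Id_on I \<and> z \<noteq> x)"
    using b0(3) unfolding covers_def by auto
  have "\<not> x \<subseteq> Id_on I" using cv(1,2) by blast
  then obtain a b where ab: "(a,b) \<in> x" "a \<noteq> b" using V_sub[OF xV] by auto
  note Ex = equivD[OF V_equiv[OF xV]]
  have abI: "a \<in> I" "b \<in> I" using ab Ex(1) by blast+
  have prx: "pr a b \<subseteq> x" unfolding pr_def using cv(1) ab Ex(3) by blast
  have m1: "(a,b) \<in> pr a b" unfolding pr_def by blast
  have m2: "(a,b) \<notin> Id_on I" using ab(2) by auto
  have "pr a b \<noteq> Id_on I" using m1 m2 by blast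
  moreover have "Id_on I \<subseteq> pr a b" unfolding pr_def by blast
  ultimately have "pr a b = x" using cv(3) pr_V[OF abI ab(2)] prx by blast
  then show ?thesis using abI ab(2) by blast
qed

definition LV :: "'a set \<Rightarrow> nat" where "LV D = (LEAST i. \<exists>E\<in>set (take i ds). D \<subseteq> E)"

lemma level_pr:
  assumes ab: "a \<in> I" "b \<in> I" "a \<noteq> b"
  shows "level (\<subseteq>) ch (pr a b) = LV (lca2 a b)"
proof -
  have "\<And>i. pr a b \<subseteq> ch i \<longleftrightarrow> (\<exists>E\<in>set (take i ds). lca2 a b \<subseteq> E)"
  proof -
    fix i
    note Ec = equivD[OF V_equiv[OF ch_V[of i]]]
    have "pr a b \<subseteq> ch i \<longleftrightarrow> (a,b) \<in> ch i"
    proof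
      assume "pr a b \<subseteq> ch i" then show "(a,b) \<in> ch i" unfolding pr_def by blast
    next
      assume h: "(a,b) \<in> ch i"
      have "(b,a) \<in> ch i" using Ec(3)[OF h] .
      moreover have "Id_on I \<subseteq> ch i" using V_Id[OF ch_V] .
      ultimately show "pr a b \<subseteq> ch i" unfolding pr_def using h by blast
    qed
    also have "... \<longleftrightarrow> (\<exists>E\<in>set (take i ds). a \<in> E \<and> b \<in> E)" unfolding ch_def clus_def using ab(3) by auto
    also have "... \<longleftrightarrow> (\<exists>E\<in>set (take i ds). lca2 a b \<subseteq> E)"
    proof
      assume "\<exists>E\<in>set (take i ds). a \<in> E \<and> b \<in> E"
      then obtain E where E: "E \<in> set (take i ds)" "a \<in> E" "b \<in> E" by blast
      have "E \<in> T" using ch_S E(1) by blast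
      then have "lca2 a b \<subseteq> E" using lca2_props(4)[OF ab(1,2)] E(2,3) by blast
      then show "\<exists>E\<in>set (take i ds). lca2 a b \<subseteq> E" using E(1) by blast
    next
      assume "\<exists>E\<in>set (take i ds). lca2 a b \<subseteq> E"
      then obtain E where E: "E \<in> set (take i ds)" "lca2 a b \<subseteq> E" by blast
      then have "a \<in> E" "b \<in> E" using lca2_props(2,3)[OF ab(1,2)] by blast+
      then show "\<exists>E\<in>set (take i ds). a \<in> E \<and> b \<in> E" using E(1) by blast
    qed
    finally show "pr a b \<subseteq> ch i \<longleftrightarrow> (\<exists>E\<in>set (take i ds). lca2 a b \<subseteq> E)" .
  qed
  then show ?thesis unfolding level_def LV_def by simp
qed

definition mrp :: "('a \<times> 'a) set \<Rightarrow> 'a \<Rightarrow> 'a \<Rightarrow> ('a \<times> 'a) set" where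
  "mrp r \<alpha> \<beta> = r \<union> {(p,q). (p,\<alpha>) \<in> r \<and> (\<beta>,q) \<in> r} \<union> {(p,q). (p,\<beta>) \<in> r \<and> (\<alpha>,q) \<in> r}"

lemma mrp_sym: "mrp r \<alpha> \<beta> = mrp r \<beta> \<alpha>" unfolding mrp_def by blast

lemma mrp_cross:
  assumes r: "r \<in> V" and I2: "\<alpha> \<in> I" "\<beta> \<in> I" and un: "\<forall>(x,y)\<in>r. lca2 x y \<noteq> lca2 \<alpha> \<beta>"
    and pa: "(p,\<alpha>) \<in> r" and bq: "(\<beta>,q) \<in> r"
  shows "lca2 p q = lca2 p \<alpha> \<or> lca2 p q = lca2 \<alpha> \<beta> \<or> lca2 p q = lca2 \<beta> q"
proof -
  note E = equivD[OF V_equiv[OF r]]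
  have vr: "valid r" using V_valid[OF r] .
  have pI: "p \<in> I" "q \<in> I" using pa bq E(1) by blast+
  have P: "lca2 p \<alpha> \<noteq> lca2 \<alpha> \<beta>" using un pa by blast
  have Q: "lca2 \<beta> q \<noteq> lca2 \<alpha> \<beta>" using un bq by blast
  have pb: "lca2 p \<beta> = lca2 p \<alpha> \<or> lca2 p \<beta> = lca2 \<alpha> \<beta>" using ultra[OF pI(1) I2 P] .
  have ne: "lca2 p \<beta> \<noteq> lca2 \<beta> q"
  proof
    assume h: "lca2 p \<beta> = lca2 \<beta> q"
    then have "lca2 p \<alpha> = lca2 \<beta> q" using pb Q by metis
    then have "(p,\<beta>) \<in> r" using validD[OF vr pa bq] by blast
    then have "(\<alpha>,\<beta>) \<in> r" using E(3)[OF pa] E(4) by blast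
    then show False using un by blast
  qed
  have "lca2 p q = lca2 p \<beta> \<or> lca2 p q = lca2 \<beta> q" using ultra[OF pI(1) I2(2) pI(2) ne] .
  then show ?thesis using pb by metis
qed

lemma mrp_helper:
  assumes r: "r \<in> V" and I2: "\<alpha> \<in> I" "\<beta> \<in> I" and un: "\<forall>(x,y)\<in>r. lca2 x y \<noteq> lca2 \<alpha> \<beta>"
    and ab: "(a,b) \<in> r" and ca: "(c,\<alpha>) \<in> r" and bd: "(\<beta>,d) \<in> r" and eq: "lca2 a b = lca2 c d"
  shows "(a,c) \<in> mrp r \<alpha> \<beta>"
proof -
  note E = equivD[OF V_equiv[OF r]]
  have vr: "valid r" using V_valid[OF r] .
  have "lca2 a b \<noteq> lca2 \<alpha> \<beta>" using un ab by blast
  then have "lca2 c d = lca2 c \<alpha> \<or> lca2 c d = lca2 \<beta> d" using mrp_cross[OF r I2 un ca bd] eq by metis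
  then show ?thesis
  proof
    assume "lca2 c d = lca2 c \<alpha>"
    then have "(a,c) \<in> r" using validD[OF vr ab ca] eq by simp
    then show ?thesis unfolding mrp_def by blast
  next
    assume "lca2 c d = lca2 \<beta> d"
    then have "(a,\<beta>) \<in> r" using validD[OF vr ab bd] eq by simp
    moreover have "(\<alpha>,c) \<in> r" using E(3)[OF ca] .
    ultimately show ?thesis unfolding mrp_def by blast
  qed
qed

lemma mrp_props:
  assumes r: "r \<in> V" and I2: "\<alpha> \<in> I" "\<beta> \<in> I" and un: "\<forall>(x,y)\<in>r. lca2 x y \<noteq> lca2 \<alpha> \<beta>"
  shows "mrp r \<alpha> \<beta> \<in> V" "(r \<union> {(\<alpha>,\<beta>),(\<beta>,\<alpha>)})\<^sup>+ = mrp r \<alpha> \<beta>"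
    "\<forall>(p,q)\<in>mrp r \<alpha> \<beta>. lca2 p q = lca2 \<alpha> \<beta> \<or> (\<exists>(x,y)\<in>r. lca2 p q = lca2 x y)"
proof -
  note E = equivD[OF V_equiv[OF r]]
  have vr: "valid r" using V_valid[OF r] .
  have un': "\<forall>(x,y)\<in>r. lca2 x y \<noteq> lca2 \<beta> \<alpha>" using un lca2_comm by metis
  have e: "equiv I (mrp r \<alpha> \<beta>)"
  proof (rule equivI')
    show "mrp r \<alpha> \<beta> \<subseteq> I \<times> I" unfolding mrp_def using E(1) by blast
    show "\<And>a. a \<in> I \<Longrightarrow> (a,a) \<in> mrp r \<alpha> \<beta>" unfolding mrp_def using E(2) by blast
    show "\<And>a b. (a,b) \<in> mrp r \<alpha> \<beta> \<Longrightarrow> (b,a) \<in> mrp r \<alpha> \<beta>" unfolding mrp_def using E(3) by blast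
    fix a b c assume ab: "(a,b) \<in> mrp r \<alpha> \<beta>" and bc: "(b,c) \<in> mrp r \<alpha> \<beta>"
    have ab': "(a,b) \<in> r \<or> ((a,\<alpha>) \<in> r \<and> (\<beta>,b) \<in> r) \<or> ((a,\<beta>) \<in> r \<and> (\<alpha>,b) \<in> r)" using ab unfolding mrp_def by blast
    have bc': "(b,c) \<in> r \<or> ((b,\<alpha>) \<in> r \<and> (\<beta>,c) \<in> r) \<or> ((b,\<beta>) \<in> r \<and> (\<alpha>,c) \<in> r)" using bc unfolding mrp_def by blast
    from ab' bc' show "(a,c) \<in> mrp r \<alpha> \<beta>" unfolding mrp_def using E(3,4) by blast
  qed
  have v: "valid (mrp r \<alpha> \<beta>)"
  proof (rule validI)
    fix a b c d assume ab: "(a,b) \<in> mrp r \<alpha> \<beta>" and cd: "(c,d) \<in> mrp r \<alpha> \<beta>" and eq: "lca2 a b = lca2 c d"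
    have one: "\<And>a b c d. (a,b) \<in> r \<Longrightarrow> (c,d) \<in> mrp r \<alpha> \<beta> \<Longrightarrow> lca2 a b = lca2 c d \<Longrightarrow> (a,c) \<in> mrp r \<alpha> \<beta>"
    proof -
      fix a b c d assume ab: "(a,b) \<in> r" and cd: "(c,d) \<in> mrp r \<alpha> \<beta>" and eq: "lca2 a b = lca2 c d"
      have "(c,d) \<in> r \<or> ((c,\<alpha>) \<in> r \<and> (\<beta>,d) \<in> r) \<or> ((c,\<beta>) \<in> r \<and> (\<alpha>,d) \<in> r)" using cd unfolding mrp_def by blast
      then show "(a,c) \<in> mrp r \<alpha> \<beta>"
      proof (elim disjE conjE)
        assume "(c,d) \<in> r" then show ?thesis using validD[OF vr ab _ eq] unfolding mrp_def by blast
      next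
        assume "(c,\<alpha>) \<in> r" "(\<beta>,d) \<in> r" then show ?thesis using mrp_helper[OF r I2 un ab _ _ eq] by blast
      next
        assume "(c,\<beta>) \<in> r" "(\<alpha>,d) \<in> r" then show ?thesis using mrp_helper[OF r I2(2,1) un' ab _ _ eq] mrp_sym by blast
      qed
    qed
    show "(a,c) \<in> mrp r \<alpha> \<beta>"
    proof (cases "(a,b) \<in> r")
      case True show ?thesis by (rule one[OF True cd eq])
    next
      case abn: False
      show ?thesis
      proof (cases "(c,d) \<in> r")
        case True
        have "(c,a) \<in> mrp r \<alpha> \<beta>" using one[OF True ab] eq by simp
        then show ?thesis using equivD(3)[OF e] by blast
      next
        case False
        have "((a,\<alpha>) \<in> r \<or> (a,\<beta>) \<in> r)" using ab abn unfolding mrp_def by blast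
        moreover have "((c,\<alpha>) \<in> r \<or> (c,\<beta>) \<in> r)" using cd False unfolding mrp_def by blast
        ultimately show ?thesis unfolding mrp_def using E(3,4) by blast
      qed
    qed
  qed
  show "mrp r \<alpha> \<beta> \<in> V" unfolding V_def using e v by blast
  show "(r \<union> {(\<alpha>,\<beta>),(\<beta>,\<alpha>)})\<^sup>+ = mrp r \<alpha> \<beta>"
  proof
    have "r \<union> {(\<alpha>,\<beta>),(\<beta>,\<alpha>)} \<subseteq> mrp r \<alpha> \<beta>" unfolding mrp_def using E(2) I2 by blast
    moreover have "trans (mrp r \<alpha> \<beta>)" using e unfolding equiv_def by blast
    ultimately show "(r \<union> {(\<alpha>,\<beta>),(\<beta>,\<alpha>)})\<^sup>+ \<subseteq> mrp r \<alpha> \<beta>" by (rule trancl_least)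
    show "mrp r \<alpha> \<beta> \<subseteq> (r \<union> {(\<alpha>,\<beta>),(\<beta>,\<alpha>)})\<^sup>+"
    proof
      fix w assume w: "w \<in> mrp r \<alpha> \<beta>"
      obtain p q where pq: "w = (p,q)" by (cases w)
      let ?R = "(r \<union> {(\<alpha>,\<beta>),(\<beta>,\<alpha>)})\<^sup>+"
      have h: "(p,q) \<in> r \<or> ((p,\<alpha>) \<in> r \<and> (\<beta>,q) \<in> r) \<or> ((p,\<beta>) \<in> r \<and> (\<alpha>,q) \<in> r)" using w pq unfolding mrp_def by blast
      have ab1: "(\<alpha>,\<beta>) \<in> ?R" "(\<beta>,\<alpha>) \<in> ?R" by auto
      have rr: "\<And>x y. (x,y) \<in> r \<Longrightarrow> (x,y) \<in> ?R" by auto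
      from h show "w \<in> ?R" unfolding pq using ab1 rr trancl_trans by metis
    qed
  qed
  show "\<forall>(p,q)\<in>mrp r \<alpha> \<beta>. lca2 p q = lca2 \<alpha> \<beta> \<or> (\<exists>(x,y)\<in>r. lca2 p q = lca2 x y)"
  proof (intro ballI)
    fix w assume w: "w \<in> mrp r \<alpha> \<beta>"
    obtain p q where pq: "w = (p,q)" by (cases w)
    have h: "(p,q) \<in> r \<or> ((p,\<alpha>) \<in> r \<and> (\<beta>,q) \<in> r) \<or> ((p,\<beta>) \<in> r \<and> (\<alpha>,q) \<in> r)" using w pq unfolding mrp_def by blast
    have used: "\<And>x y. (x,y) \<in> r \<Longrightarrow> lca2 p q = lca2 x y \<Longrightarrow> lca2 p q = lca2 \<alpha> \<beta> \<or> (\<exists>(x,y)\<in>r. lca2 p q = lca2 x y)"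
    proof -
      fix x y assume "(x,y) \<in> r" "lca2 p q = lca2 x y"
      then have "\<exists>(x,y)\<in>r. lca2 p q = lca2 x y" by (intro bexI[of _ "(x,y)"]) auto
      then show "lca2 p q = lca2 \<alpha> \<beta> \<or> (\<exists>(x,y)\<in>r. lca2 p q = lca2 x y)" by (rule disjI2)
    qed
    have "lca2 p q = lca2 \<alpha> \<beta> \<or> (\<exists>(x,y)\<in>r. lca2 p q = lca2 x y)"
    proof (rule disjE[OF h])
      assume "(p,q) \<in> r" then show ?thesis using used by blast
    next
      assume "((p,\<alpha>) \<in> r \<and> (\<beta>,q) \<in> r) \<or> ((p,\<beta>) \<in> r \<and> (\<alpha>,q) \<in> r)"
      then show ?thesis
      proof
        assume h1: "(p,\<alpha>) \<in> r \<and> (\<beta>,q) \<in> r"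
        then have "lca2 p q = lca2 p \<alpha> \<or> lca2 p q = lca2 \<alpha> \<beta> \<or> lca2 p q = lca2 \<beta> q"
          using mrp_cross[OF r I2 un] by blast
        then show ?thesis using h1 used by blast
      next
        assume h2: "(p,\<beta>) \<in> r \<and> (\<alpha>,q) \<in> r"
        then have "lca2 p q = lca2 p \<beta> \<or> lca2 p q = lca2 \<beta> \<alpha> \<or> lca2 p q = lca2 \<alpha> q"
          using mrp_cross[OF r I2(2,1) un'] by blast
        then have "lca2 p q = lca2 p \<beta> \<or> lca2 p q = lca2 \<alpha> \<beta> \<or> lca2 p q = lca2 \<alpha> q" using lca2_comm by metis
        then show ?thesis using h2 used by blast
      qed
    qed
    then show "case w of (p,q) \<Rightarrow> lca2 p q = lca2 \<alpha> \<beta> \<or> (\<exists>(x,y)\<in>r. lca2 p q = lca2 x y)" using pq by simp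
  qed
qed

end

locale iso_tr =
  fixes V :: "'c set" and le1 :: "'c \<Rightarrow> 'c \<Rightarrow> bool" and f :: "'c \<Rightarrow> 'b" and le2 :: "'b \<Rightarrow> 'b \<Rightarrow> bool"
  assumes fl: "finite_lattice V le1"
    and lubs: "\<And>S. S \<subseteq> V \<Longrightarrow> \<exists>x. is_lub V le1 S x"
    and iso: "\<And>x y. x \<in> V \<Longrightarrow> y \<in> V \<Longrightarrow> le2 (f x) (f y) \<longleftrightarrow> le1 x y"
begin

abbreviation "P \<equiv> f ` V"
definition "g = inv_into V f"

lemma refl1: "x \<in> V \<Longrightarrow> le1 x x" using fl unfolding finite_lattice_def by blast
lemma antisym1: "x \<in> V \<Longrightarrow> y \<in> V \<Longrightarrow> le1 x y \<Longrightarrow> le1 y x \<Longrightarrow> x = y"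
  using fl unfolding finite_lattice_def by blast
lemma trans1: "x \<in> V \<Longrightarrow> y \<in> V \<Longrightarrow> z \<in> V \<Longrightarrow> le1 x y \<Longrightarrow> le1 y z \<Longrightarrow> le1 x z"
  using fl unfolding finite_lattice_def by blast
lemma glb_ex: "x \<in> V \<Longrightarrow> y \<in> V \<Longrightarrow> \<exists>z. is_glb V le1 {x,y} z"
  using fl unfolding finite_lattice_def by blast

lemma inj: "inj_on f V"
proof (rule inj_onI)
  fix x y assume "x \<in> V" "y \<in> V" "f x = f y"
  then show "x = y" using iso[of x x] iso[of x y] iso[of y x] refl1 antisym1 by metis
qed

lemma g_in: "p \<in> P \<Longrightarrow> g p \<in> V" unfolding g_def by (simp add: inv_into_into)
lemma f_g: "p \<in> P \<Longrightarrow> f (g p) = p" unfolding g_def by (simp add: f_inv_into_f)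
lemma g_f: "x \<in> V \<Longrightarrow> g (f x) = x" unfolding g_def using inj by (simp add: inv_into_f_f)

lemma lub_iso:
  assumes S: "S \<subseteq> V" and x: "x \<in> V"
  shows "is_lub P le2 (f ` S) (f x) \<longleftrightarrow> is_lub V le1 S x"
  unfolding is_lub_def using S x iso by (auto simp: subset_iff)

lemma glb_iso:
  assumes S: "S \<subseteq> V" and x: "x \<in> V"
  shows "is_glb P le2 (f ` S) (f x) \<longleftrightarrow> is_glb V le1 S x"
  unfolding is_glb_def using S x iso by (auto simp: subset_iff)

lemma lub_unique: "is_lub V le1 S x \<Longrightarrow> is_lub V le1 S y \<Longrightarrow> x = y"
  unfolding is_lub_def using antisym1 by blast
lemma glb_unique: "is_glb V le1 S x \<Longrightarrow> is_glb V le1 S y \<Longrightarrow> x = y"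
  unfolding is_glb_def using antisym1 by blast

lemma Join_V: "S \<subseteq> V \<Longrightarrow> is_lub V le1 S (Join V le1 S)"
proof -
  assume S: "S \<subseteq> V"
  obtain x where x: "is_lub V le1 S x" using lubs[OF S] by blast
  have "Join V le1 S = x" unfolding Join_def using x lub_unique by blast
  then show ?thesis using x by simp
qed

lemma lub_in: "is_lub V le1 S x \<Longrightarrow> x \<in> V" unfolding is_lub_def by blast
lemma glb_in: "is_glb V le1 S x \<Longrightarrow> x \<in> V" unfolding is_glb_def by blast

lemma Join_iso:
  assumes S: "S \<subseteq> V" shows "Join P le2 (f ` S) = f (Join V le1 S)"
proof -
  let ?x = "Join V le1 S"
  have x: "is_lub V le1 S ?x" using Join_V[OF S] .
  have xV: "?x \<in> V" using lub_in[OF x] .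
  have px: "is_lub P le2 (f ` S) (f ?x)" using lub_iso[OF S xV] x by simp
  have uq: "\<And>y. is_lub P le2 (f ` S) y \<Longrightarrow> y = f ?x"
  proof -
    fix y assume y: "is_lub P le2 (f ` S) y"
    then have yP: "y \<in> P" unfolding is_lub_def by blast
    have "is_lub V le1 S (g y)" using lub_iso[OF S g_in[OF yP]] f_g[OF yP] y by simp
    then have "g y = ?x" using lub_unique x by blast
    then show "y = f ?x" using f_g[OF yP] by metis
  qed
  show ?thesis unfolding Join_def[of P le2 "f ` S"] by (rule the_equality) (fact px, erule uq)
qed

lemma join_iso: "x \<in> V \<Longrightarrow> y \<in> V \<Longrightarrow> join P le2 (f x) (f y) = f (join V le1 x y)"
  unfolding join_def using Join_iso[of "{x,y}"] by simp

lemma join_in: "x \<in> V \<Longrightarrow> y \<in> V \<Longrightarrow> join V le1 x y \<in> V"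
  unfolding join_def using Join_V[of "{x,y}"] lub_in by simp

lemma meet_V: assumes "x \<in> V" "y \<in> V" shows "is_glb V le1 {x,y} (meet V le1 x y)"
proof -
  obtain z where z: "is_glb V le1 {x,y} z" using glb_ex[OF assms] by blast
  have "meet V le1 x y = z" unfolding meet_def using z glb_unique by blast
  then show ?thesis using z by simp
qed

lemma meet_in: "x \<in> V \<Longrightarrow> y \<in> V \<Longrightarrow> meet V le1 x y \<in> V"
  using meet_V glb_in by blast

lemma meet_iso:
  assumes xy: "x \<in> V" "y \<in> V" shows "meet P le2 (f x) (f y) = f (meet V le1 x y)"
proof -
  let ?m = "meet V le1 x y"
  have m: "is_glb V le1 {x,y} ?m" using meet_V[OF xy] .
  have mV: "?m \<in> V" using glb_in[OF m] .
  have S: "{x,y} \<subseteq> V" using xy by blast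
  have pm: "is_glb P le2 {f x, f y} (f ?m)" using glb_iso[OF S mV] m by simp
  have uq: "\<And>z. is_glb P le2 {f x, f y} z \<Longrightarrow> z = f ?m"
  proof -
    fix z assume z: "is_glb P le2 {f x, f y} z"
    then have zP: "z \<in> P" unfolding is_glb_def by blast
    have "is_glb V le1 {x,y} (g z)" using glb_iso[OF S g_in[OF zP]] f_g[OF zP] z by simp
    then have "g z = ?m" using glb_unique m by blast
    then show "z = f ?m" using f_g[OF zP] by metis
  qed
  show ?thesis unfolding meet_def[of P le2 "f x" "f y"] by (rule the_equality) (fact pm, erule uq)
qed

lemma fl2: "finite_lattice P le2"
  unfolding finite_lattice_def
proof (intro conjI ballI impI)
  show "finite P" using fl unfolding finite_lattice_def by blast
  show "P \<noteq> {}" using fl unfolding finite_lattice_def by blast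
next
  fix p assume "p \<in> P" then show "le2 p p" using iso refl1 by blast
next
  fix p q assume "p \<in> P" "q \<in> P" "le2 p q \<and> le2 q p"
  then show "p = q" using iso antisym1 by blast
next
  fix p q r assume "p \<in> P" "q \<in> P" "r \<in> P" "le2 p q \<and> le2 q r"
  then show "le2 p r" using iso trans1 by blast
next
  fix p q assume p: "p \<in> P" and q: "q \<in> P"
  then obtain x y where xy: "x \<in> V" "y \<in> V" "p = f x" "q = f y" by blast
  have S: "{x,y} \<subseteq> V" using xy by blast
  obtain l where l: "is_lub V le1 {x,y} l" using lubs[OF S] by blast
  have "is_lub P le2 {p,q} (f l)" using lub_iso[OF S lub_in[OF l]] l xy by simp
  then show "\<exists>z. is_lub P le2 {p, q} z" by blast
next
  fix p q assume p: "p \<in> P" and q: "q \<in> P"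
  then obtain x y where xy: "x \<in> V" "y \<in> V" "p = f x" "q = f y" by blast
  have S: "{x,y} \<subseteq> V" using xy by blast
  obtain m where m: "is_glb V le1 {x,y} m" using glb_ex[OF xy(1,2)] by blast
  have "is_glb P le2 {p,q} (f m)" using glb_iso[OF S glb_in[OF m]] m xy by simp
  then show "\<exists>z. is_glb P le2 {p, q} z" by blast
qed

lemma covers_iso: "x \<in> V \<Longrightarrow> y \<in> V \<Longrightarrow> covers P le2 (f x) (f y) \<longleftrightarrow> covers V le1 x y"
  unfolding covers_def using iso inj by (auto simp: inj_on_eq_iff)

lemma atoms_iso: "atoms P le2 = f ` atoms V le1"
proof
  show "atoms P le2 \<subseteq> f ` atoms V le1"
  proof
    fix p assume "p \<in> atoms P le2"
    then obtain b where p: "p \<in> P" "b \<in> P" "\<forall>x\<in>P. le2 b x" "covers P le2 b p" unfolding atoms_def by blast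
    obtain x y where xy: "x \<in> V" "y \<in> V" "p = f x" "b = f y" using p by blast
    have "\<forall>z\<in>V. le1 y z" using p(3) iso xy by auto
    moreover have "covers V le1 y x" using covers_iso[OF xy(2,1)] p(4) xy by simp
    ultimately have "x \<in> atoms V le1" unfolding atoms_def using xy by blast
    then show "p \<in> f ` atoms V le1" using xy by blast
  qed
  show "f ` atoms V le1 \<subseteq> atoms P le2"
  proof
    fix p assume "p \<in> f ` atoms V le1"
    then obtain x b where x: "p = f x" "x \<in> V" "b \<in> V" "\<forall>z\<in>V. le1 b z" "covers V le1 b x"
      unfolding atoms_def by blast
    have "\<forall>z\<in>P. le2 (f b) z" using x(3,4) iso by auto
    moreover have "covers P le2 (f b) (f x)" using covers_iso[OF x(3,2)] x(5) by simp
    ultimately show "p \<in> atoms P le2" unfolding atoms_def using x by blast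
  qed
qed

lemma atoms_V: "atoms V le1 \<subseteq> V" unfolding atoms_def by blast

lemma main:
  assumes mc: "maximal_chain V le1 c n" and cV: "\<And>i. c i \<in> V"
    and lm: "\<forall>i\<le>n. left_modular V le1 (c i)" and lc: "level_condition V le1 c"
  shows "LL_lattice P le2"
  unfolding LL_lattice_def
proof (intro conjI exI)
  show "finite_lattice P le2" using fl2 .
  show "maximal_chain P le2 (f \<circ> c) n"
    using mc cV iso covers_iso unfolding maximal_chain_def by auto
  show "\<forall>i\<le>n. left_modular P le2 ((f \<circ> c) i)"
  proof (intro allI impI)
    fix i assume i: "i \<le> n"
    have L: "left_modular V le1 (c i)" using lm i by blast
    show "left_modular P le2 ((f \<circ> c) i)"
      unfolding left_modular_def
    proof (intro ballI impI)
      fix p q assume p: "p \<in> P" and q: "q \<in> P" and pq: "le2 p q"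
      obtain y z where yz: "y \<in> V" "z \<in> V" "p = f y" "q = f z" using p q by blast
      have le: "le1 y z" using iso yz pq by simp
      have eq: "join V le1 y (meet V le1 (c i) z) = meet V le1 (join V le1 y (c i)) z"
        using L yz le unfolding left_modular_def by blast
      have "join P le2 p (meet P le2 ((f \<circ> c) i) q) = f (join V le1 y (meet V le1 (c i) z))"
        using yz meet_iso[OF cV yz(2)] join_iso[OF yz(1) meet_in[OF cV yz(2)]] by simp
      moreover have "meet P le2 (join P le2 p ((f \<circ> c) i)) q = f (meet V le1 (join V le1 y (c i)) z)"
        using yz join_iso[OF yz(1) cV] meet_iso[OF join_in[OF yz(1) cV] yz(2)] by simp
      ultimately show "join P le2 p (meet P le2 ((f \<circ> c) i) q) = meet P le2 (join P le2 p ((f \<circ> c) i)) q"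
        using eq by simp
    qed
  qed
  show "level_condition P le2 (f \<circ> c)"
    unfolding level_condition_def
  proof (intro allI impI notI)
    fix k :: nat and a :: "nat \<Rightarrow> 'b"
    assume k: "1 \<le> k"
      and h: "(\<forall>i\<le>k. a i \<in> atoms P le2) \<and> (\<forall>i<k. level le2 (f \<circ> c) (a i) < level le2 (f \<circ> c) (a (Suc i)))"
      and bad: "le2 (a 0) (Join P le2 (a ` {1..k}))"
    define a' where "a' = (\<lambda>i. g (a i))"
    have at: "\<And>i. i \<le> k \<Longrightarrow> a' i \<in> atoms V le1 \<and> a i = f (a' i)"
    proof -
      fix i assume "i \<le> k"
      then have "a i \<in> f ` atoms V le1" using h atoms_iso by blast
      then obtain b where b: "b \<in> atoms V le1" "a i = f b" by blast
      have bV: "b \<in> V" using b(1) atoms_V by blast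
      have "a' i = b" unfolding a'_def b(2) using g_f[OF bV] .
      then show "a' i \<in> atoms V le1 \<and> a i = f (a' i)" using b by simp
    qed
    have aV: "\<And>i. i \<le> k \<Longrightarrow> a' i \<in> V" using at atoms_V by blast
    have lev: "\<And>i. i \<le> k \<Longrightarrow> level le2 (f \<circ> c) (a i) = level le1 c (a' i)"
    proof -
      fix i assume i: "i \<le> k"
      have "\<And>j. le2 (a i) ((f \<circ> c) j) = le1 (a' i) (c j)" using at[OF i] iso aV[OF i] cV by simp
      then show "level le2 (f \<circ> c) (a i) = level le1 c (a' i)" unfolding level_def by simp
    qed
    have inc: "\<forall>i<k. level le1 c (a' i) < level le1 c (a' (Suc i))" using h lev by simp
    have S: "a' ` {1..k} \<subseteq> V" using aV by auto
    have img: "a ` {1..k} = f ` (a' ` {1..k})" using at by (auto simp: image_image)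
    have J: "Join P le2 (a ` {1..k}) = f (Join V le1 (a' ` {1..k}))" using img Join_iso[OF S] by simp
    have JV: "Join V le1 (a' ` {1..k}) \<in> V" using lub_in[OF Join_V[OF S]] .
    have "le1 (a' 0) (Join V le1 (a' ` {1..k}))" using bad J at[of 0] iso[OF aV[of 0] JV] by simp
    moreover have "\<not> le1 (a' 0) (Join V le1 (a' ` {1..k}))"
      using lc k at inc unfolding level_condition_def by blast
    ultimately show False by blast
  qed
qed

end

context ftree begin

definition rho :: "(nat \<Rightarrow> 'a) \<Rightarrow> (nat \<Rightarrow> 'a) \<Rightarrow> nat \<Rightarrow> ('a \<times> 'a) set" where
  "rho \<alpha> \<beta> m = (Id_on I \<union> (\<Union>i\<in>{1..m}. pr (\<alpha> i) (\<beta> i)))\<^sup>+"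

lemma build:
  assumes I2: "\<forall>i\<in>{1..k}. \<alpha> i \<in> I \<and> \<beta> i \<in> I \<and> \<alpha> i \<noteq> \<beta> i"
    and dist: "\<forall>i\<in>{1..k}. \<forall>j\<in>{1..k}. i \<noteq> j \<longrightarrow> lca2 (\<alpha> i) (\<beta> i) \<noteq> lca2 (\<alpha> j) (\<beta> j)"
  shows "m \<le> k \<Longrightarrow> rho \<alpha> \<beta> m \<in> V \<and> (\<forall>(p,q)\<in>rho \<alpha> \<beta> m. p = q \<or> (\<exists>i\<in>{1..m}. lca2 p q = lca2 (\<alpha> i) (\<beta> i)))"
proof (induct m)
  case 0
  have t: "trans (Id_on I)" unfolding trans_def by blast
  have "rho \<alpha> \<beta> 0 = Id_on I" unfolding rho_def using t by simp
  then show ?case using Id_V by auto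
next
  case (Suc m)
  have mk: "m \<le> k" using Suc by simp
  let ?r = "rho \<alpha> \<beta> m"
  have IH: "?r \<in> V" "\<forall>(p,q)\<in>?r. p = q \<or> (\<exists>i\<in>{1..m}. lca2 p q = lca2 (\<alpha> i) (\<beta> i))" using Suc mk by auto
  define a' b' where "a' = \<alpha> (Suc m)" "b' = \<beta> (Suc m)"
  have sm: "Suc m \<in> {1..k}" using Suc by simp
  have abI: "a' \<in> I" "b' \<in> I" "a' \<noteq> b'" using I2 sm a'_b'_def by auto
  have eq: "rho \<alpha> \<beta> (Suc m) = (?r \<union> {(a',b'),(b',a')})\<^sup>+"
  proof -
    have "Id_on I \<union> (\<Union>i\<in>{1..Suc m}. pr (\<alpha> i) (\<beta> i)) = (Id_on I \<union> (\<Union>i\<in>{1..m}. pr (\<alpha> i) (\<beta> i))) \<union> pr a' b'"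
      using a'_b'_def by (auto simp: atLeastAtMostSuc_conv)
    then have "rho \<alpha> \<beta> (Suc m) = (?r \<union> pr a' b')\<^sup>+" unfolding rho_def using trancl_absorb by metis
    also have "?r \<union> pr a' b' = ?r \<union> {(a',b'),(b',a')}" unfolding pr_def using V_Id[OF IH(1)] by blast
    finally show ?thesis .
  qed
  have un: "\<forall>(x,y)\<in>?r. lca2 x y \<noteq> lca2 a' b'"
  proof (intro ballI)
    fix w assume w: "w \<in> ?r"
    obtain x y where xy: "w = (x,y)" by (cases w)
    have wr: "(x,y) \<in> ?r" using w xy by simp
    have xyI: "x \<in> I" "y \<in> I" using subsetD[OF V_sub[OF IH(1)] wr] by auto
    have "x = y \<or> (\<exists>i\<in>{1..m}. lca2 x y = lca2 (\<alpha> i) (\<beta> i))" using bspec[OF IH(2) wr] by simp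
    then have "lca2 x y \<noteq> lca2 a' b'"
    proof
      assume "x = y"
      then have "lca2 x y = {x}" using lca2_same[OF xyI(1)] by simp
      moreover have "a' \<in> lca2 a' b'" "b' \<in> lca2 a' b'" using lca2_props[OF abI(1,2)] by auto
      ultimately show ?thesis using abI(3) by auto
    next
      assume "\<exists>i\<in>{1..m}. lca2 x y = lca2 (\<alpha> i) (\<beta> i)"
      then obtain i where i: "i \<in> {1..m}" "lca2 x y = lca2 (\<alpha> i) (\<beta> i)" by blast
      have "i \<in> {1..k}" "i \<noteq> Suc m" using i mk by auto
      then show ?thesis using dist sm i a'_b'_def by metis
    qed
    then show "case w of (x,y) \<Rightarrow> lca2 x y \<noteq> lca2 a' b'" using xy by simp
  qed
  note M = mrp_props[OF IH(1) abI(1,2) un]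
  have V1: "rho \<alpha> \<beta> (Suc m) \<in> V" using eq M(1,2) by simp
  have U1: "\<forall>(p,q)\<in>rho \<alpha> \<beta> (Suc m). p = q \<or> (\<exists>i\<in>{1..Suc m}. lca2 p q = lca2 (\<alpha> i) (\<beta> i))"
  proof (intro ballI)
    fix w assume w: "w \<in> rho \<alpha> \<beta> (Suc m)"
    obtain p q where pq: "w = (p,q)" by (cases w)
    have wr: "(p,q) \<in> rho \<alpha> \<beta> (Suc m)" using w pq by simp
    have pqI: "p \<in> I" "q \<in> I" using subsetD[OF V_sub[OF V1] wr] by auto
    have wm: "(p,q) \<in> mrp ?r a' b'" using wr eq M(2) by simp
    have h: "lca2 p q = lca2 a' b' \<or> (\<exists>(x,y)\<in>?r. lca2 p q = lca2 x y)" using bspec[OF M(3) wm] by simp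
    have "p = q \<or> (\<exists>i\<in>{1..Suc m}. lca2 p q = lca2 (\<alpha> i) (\<beta> i))"
    proof (rule disjE[OF h])
      assume "lca2 p q = lca2 a' b'" then show ?thesis using sm a'_b'_def by auto
    next
      assume "\<exists>(x,y)\<in>?r. lca2 p q = lca2 x y"
      then obtain x y where xy: "(x,y) \<in> ?r" "lca2 p q = lca2 x y" by blast
      have xI: "x \<in> I" using subsetD[OF V_sub[OF IH(1)] xy(1)] by auto
      have "x = y \<or> (\<exists>i\<in>{1..m}. lca2 x y = lca2 (\<alpha> i) (\<beta> i))" using bspec[OF IH(2) xy(1)] by simp
      then show ?thesis
      proof
        assume "x = y"
        then have "lca2 p q = {x}" using xy(2) lca2_same[OF xI] by simp
        then have "p = q" using lca2_props(2,3)[OF pqI] by auto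
        then show ?thesis by blast
      next
        assume "\<exists>i\<in>{1..m}. lca2 x y = lca2 (\<alpha> i) (\<beta> i)"
        then show ?thesis using xy(2) by auto
      qed
    qed
    then show "case w of (p,q) \<Rightarrow> p = q \<or> (\<exists>i\<in>{1..Suc m}. lca2 p q = lca2 (\<alpha> i) (\<beta> i))" using pq by simp
  qed
  show ?case using V1 U1 by blast
qed

lemma lc_V: "level_condition V (\<subseteq>) ch"
  unfolding level_condition_def
proof (intro allI impI notI)
  fix k :: nat and a :: "nat \<Rightarrow> ('a \<times> 'a) set"
  assume k: "1 \<le> k"
    and h: "(\<forall>i\<le>k. a i \<in> atoms V (\<subseteq>)) \<and> (\<forall>i<k. level (\<subseteq>) ch (a i) < level (\<subseteq>) ch (a (Suc i)))"
    and bad: "a 0 \<subseteq> Join V (\<subseteq>) (a ` {1..k})"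
  have "\<forall>i. \<exists>pq. i \<le> k \<longrightarrow> fst pq \<in> I \<and> snd pq \<in> I \<and> fst pq \<noteq> snd pq \<and> a i = pr (fst pq) (snd pq)"
  proof
    fix i show "\<exists>pq. i \<le> k \<longrightarrow> fst pq \<in> I \<and> snd pq \<in> I \<and> fst pq \<noteq> snd pq \<and> a i = pr (fst pq) (snd pq)"
    proof (cases "i \<le> k")
      case True
      have "a i \<in> atoms V (\<subseteq>)" using h True by blast
      then obtain x y where "x \<in> I" "y \<in> I" "x \<noteq> y" "a i = pr x y" using atoms_pr by blast
      then show ?thesis by (intro exI[of _ "(x,y)"]) simp
    qed simp
  qed
  from choice[OF this] obtain g where g0: "\<forall>i. i \<le> k \<longrightarrow> fst (g i) \<in> I \<and> snd (g i) \<in> I \<and> fst (g i) \<noteq> snd (g i) \<and> a i = pr (fst (g i)) (snd (g i))"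
    by blast
  have g: "\<And>i. i \<le> k \<Longrightarrow> fst (g i) \<in> I \<and> snd (g i) \<in> I \<and> fst (g i) \<noteq> snd (g i) \<and> a i = pr (fst (g i)) (snd (g i))"
    using g0 by blast
  define \<alpha> where "\<alpha> = (\<lambda>i. fst (g i))"
  define \<beta> where "\<beta> = (\<lambda>i. snd (g i))"
  have ab: "\<And>i. i \<le> k \<Longrightarrow> \<alpha> i \<in> I \<and> \<beta> i \<in> I \<and> \<alpha> i \<noteq> \<beta> i \<and> a i = pr (\<alpha> i) (\<beta> i)"
    using g unfolding \<alpha>_def \<beta>_def by blast
  define L where "L = (\<lambda>i. level (\<subseteq>) ch (a i))"
  have Lv: "\<And>i. i \<le> k \<Longrightarrow> L i = LV (lca2 (\<alpha> i) (\<beta> i))" unfolding L_def using ab level_pr by metis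
  have str: "\<And>i j. i < j \<Longrightarrow> j \<le> k \<Longrightarrow> L i < L j" using strict_chain[of k L] h unfolding L_def by blast
  have dl: "\<And>i j. i < j \<Longrightarrow> j \<le> k \<Longrightarrow> lca2 (\<alpha> i) (\<beta> i) \<noteq> lca2 (\<alpha> j) (\<beta> j)"
  proof
    fix i j assume ij: "i < j" "j \<le> k" and e: "lca2 (\<alpha> i) (\<beta> i) = lca2 (\<alpha> j) (\<beta> j)"
    have "L i = L j" using Lv[of i] Lv[of j] ij e by simp
    then show False using str[OF ij] by simp
  qed
  have I2: "\<forall>i\<in>{1..k}. \<alpha> i \<in> I \<and> \<beta> i \<in> I \<and> \<alpha> i \<noteq> \<beta> i" using ab by auto
  have dist: "\<forall>i\<in>{1..k}. \<forall>j\<in>{1..k}. i \<noteq> j \<longrightarrow> lca2 (\<alpha> i) (\<beta> i) \<noteq> lca2 (\<alpha> j) (\<beta> j)"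
  proof (intro ballI impI)
    fix i j assume "i \<in> {1..k}" "j \<in> {1..k}" "i \<noteq> j"
    then have "i < j \<and> j \<le> k \<or> j < i \<and> i \<le> k" by auto
    then show "lca2 (\<alpha> i) (\<beta> i) \<noteq> lca2 (\<alpha> j) (\<beta> j)" using dl by metis
  qed
  have B: "rho \<alpha> \<beta> k \<in> V" "\<forall>(p,q)\<in>rho \<alpha> \<beta> k. p = q \<or> (\<exists>i\<in>{1..k}. lca2 p q = lca2 (\<alpha> i) (\<beta> i))"
    using build[OF I2 dist, of k] by auto
  have eqU: "Id_on I \<union> (\<Union>i\<in>{1..k}. pr (\<alpha> i) (\<beta> i)) = Id_on I \<union> \<Union>(a ` {1..k})"
    using ab by auto
  have lub: "is_lub V (\<subseteq>) (a ` {1..k}) (rho \<alpha> \<beta> k)"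
    unfolding is_lub_def
  proof (intro conjI ballI impI)
    show "rho \<alpha> \<beta> k \<in> V" by (rule B(1))
    fix s assume "s \<in> a ` {1..k}"
    then have s1: "s \<subseteq> Id_on I \<union> \<Union>(a ` {1..k})" by blast
    have s2: "Id_on I \<union> \<Union>(a ` {1..k}) \<subseteq> (Id_on I \<union> \<Union>(a ` {1..k}))\<^sup>+" by (rule trancl_incr)
    show "s \<subseteq> rho \<alpha> \<beta> k" unfolding rho_def eqU using s1 s2 by (rule subset_trans)
  next
    fix t assume t: "t \<in> V" "\<forall>s\<in>a ` {1..k}. s \<subseteq> t"
    have "Id_on I \<union> \<Union>(a ` {1..k}) \<subseteq> t" using t V_Id by blast
    moreover have "trans t" using V_equiv[OF t(1)] unfolding equiv_def by blast
    ultimately show "rho \<alpha> \<beta> k \<subseteq> t" unfolding rho_def eqU by (rule trancl_least)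
  qed
  have J: "Join V (\<subseteq>) (a ` {1..k}) = rho \<alpha> \<beta> k" using Join_eq[OF lub] .
  have "(\<alpha> 0, \<beta> 0) \<in> a 0" using ab[of 0] unfolding pr_def by simp
  then have in0: "(\<alpha> 0, \<beta> 0) \<in> rho \<alpha> \<beta> k" using subsetD[OF bad[unfolded J]] by blast
  have "\<alpha> 0 = \<beta> 0 \<or> (\<exists>i\<in>{1..k}. lca2 (\<alpha> 0) (\<beta> 0) = lca2 (\<alpha> i) (\<beta> i))" using bspec[OF B(2) in0] by simp
  then show False
  proof
    assume "\<alpha> 0 = \<beta> 0" then show False using ab[of 0] by simp
  next
    assume "\<exists>i\<in>{1..k}. lca2 (\<alpha> 0) (\<beta> 0) = lca2 (\<alpha> i) (\<beta> i)"
    then obtain i where "i \<in> {1..k}" "lca2 (\<alpha> 0) (\<beta> 0) = lca2 (\<alpha> i) (\<beta> i)" by blast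
    then show False using dl[of 0 i] by auto
  qed
qed

theorem LL_interval: "LL_lattice (forest_interval I T) (forest_le I)"
proof -
  interpret iso_tr V "(\<subseteq>)" Fo "forest_le I"
  proof
    show "finite_lattice V (\<subseteq>)" by (rule fl_V)
    show "\<And>S. S \<subseteq> V \<Longrightarrow> \<exists>x. is_lub V (\<subseteq>) S x" by (rule lubs_V)
    show "\<And>x y. x \<in> V \<Longrightarrow> y \<in> V \<Longrightarrow> forest_le I (Fo x) (Fo y) = (x \<subseteq> y)" by (rule le_Fo_iff)
  qed
  have "LL_lattice (Fo ` V) (forest_le I)"
    using main[OF ch_max ch_V _ lc_V] ch_lm by blast
  then show ?thesis using interval_eq by simp
qed

end

theorem proposition5p6:
  fixes I :: "'a set" and T :: "'a set set"
  assumes "finite I" and "is_tree I T"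
  shows "LL_lattice (forest_interval I T) (forest_le I)"
proof -
  interpret ftree I T using assms by unfold_locales
  show ?thesis by (rule LL_interval)
qed


end
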